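(* Let $\Lambda'$ be the set obtained from \[ \Lambda=\Big\{(s,t,\sigma,\tau;u,v,\xi,\eta):\ t=\tfrac{2}{c_0}|R(u,v,s)|,\ \sigma=\tfrac{2\tau}{c_0}\hat R(u,v,s)\cdot\dot\gamma(s),\ (\xi,\eta)=-\tfrac{2\tau}{c_0}\pi_{T\Psi}\hat R(u,v,s)\Big\} \] by replacing $(\xi,\eta)$ with $(-\xi,-\eta)$ (the canonical relation of $F$). Then $\Lambda'$ is a homogeneous canonical relation which is locally of graph type away from the degenerate set $\Sigma=\Sigma_1\cup\Sigma_2$, where \[ \Sigma_1=\{(s,t,\sigma,\tau,u,v,\xi,\eta):\ \pi_{T\Psi}\hat R(u,v,s)\parallel \nabla_{u,v}(\hat R(u,v,s)\cdot\dot\gamma(s))\}\cap\Lambda', \] \[ \Sigma_2=\{(s,t,\sigma,\tau,u,v,\xi,\eta):\ \pi_{T\Psi}\hat R(u,v,s)\parallel \partial_s\pi_{T\Psi}\hat R(u,v,s)\}\cap\Lambda'. \]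
   Context: Setting (synthetic aperture radar model). $\gamma$ is a smooth embedded curve in $\mathbb{R}^3$ (the flight path) parametrized by unit speed $s$, and $\Psi\subset\mathbb{R}^3$ is a smooth embedded surface, locally parametrized as $\psi(u,v)$, with $\mathrm{dist}(\Psi,\gamma)>0$. $c_0>0$ is a constant. $\mathcal{Y}=(s_1,s_2)\times(t_1,t_2)$ and $\mathcal{X}=\{(u,v):\exists s\in(s_1,s_2),\ \tfrac{2}{c_0}|\psi(u,v)-\gamma(s)|\in(t_1,t_2)\}$. Write $R(u,v,s)=\psi(u,v)-\gamma(s)$, $\hat R=R/|R|$; $\pi_{T\Psi}\hat R(u,v,s)$ is the projection of $\hat R(u,v,s)$ onto the tangent plane of $\Psi$ at $\psi(u,v)$, expressed as a pair of components $(\pi_1,\pi_2)$ in the coordinates $(u,v)$; "$\parallel$" means the two planar vectors are parallel (linearly dependent). The forward operator is $FV(s,t)=\int A(u,v,s,t,\omega)e^{-i\omega(t-\frac{2}{c_0}|\psi(u,v)-\gamma(s)|)}V(u,v)\,du\,dv\,d\omega$ with $A$ a properly supported amplitude of order two. Coordinates $(s,t,\sigma,\tau)$ on $T^*\mathcal{Y}$, $(u,v,\xi,\eta)$ on $T^*\mathcal{X}$. A canonical relation $C\subset (T^*\mathcal{Y}\setminus0)\times(T^*\mathcal{X}\setminus0)$ is locally of graph type near a point if the projections of $C$ to $T^*\mathcal{Y}$ and to $T^*\mathcal{X}$ have differentials of full rank there (so that $C$ is locally the graph of a diffeomorphism). *)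

theory Defs
  imports "HOL-Analysis.Analysis" "HOL-Analysis.Cross3"
begin

type_synonym R4 = "real \<times> real \<times> real \<times> real"
type_synonym pt = "R4 \<times> R4"
  \<comment> \<open>a point ((s,t,sigma,tau),(u,v,xi,eta)) of T*Y x T*X\<close>

fun iter_dderiv :: "'a::real_normed_vector list \<Rightarrow> ('a \<Rightarrow> real) \<Rightarrow> 'a \<Rightarrow> real" where
  "iter_dderiv [] f = f"
| "iter_dderiv (b # bs) f = (\<lambda>x. deriv (\<lambda>h. iter_dderiv bs f (x + h *\<^sub>R b)) 0)"

definition smooth_on_set :: "'a::euclidean_space set \<Rightarrow> ('a \<Rightarrow> 'b::euclidean_space) \<Rightarrow> bool" where
  "smooth_on_set S f \<longleftrightarrow>
     (\<forall>c\<in>Basis. \<forall>bs. set bs \<subseteq> Basis \<longrightarrow>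
        continuous_on S (iter_dderiv bs (\<lambda>x. f x \<bullet> c)) \<and>
        (\<forall>b\<in>Basis. \<forall>x\<in>S. (\<lambda>h. iter_dderiv bs (\<lambda>x. f x \<bullet> c) (x + h *\<^sub>R b)) differentiable (at 0)))"

definition submanifold4 :: "'e::euclidean_space set \<Rightarrow> bool" where
  "submanifold4 M \<longleftrightarrow>
     (\<forall>p\<in>M. \<exists>(U::R4 set) W (\<phi>::R4 \<Rightarrow> 'e). open U \<and> open W \<and> p \<in> W \<and>
        smooth_on_set U \<phi> \<and> inj_on \<phi> U \<and> \<phi> ` U = M \<inter> W \<and>
        continuous_on (M \<inter> W) (inv_into U \<phi>) \<and>
        (\<forall>x\<in>U. \<exists>L. (\<phi> has_derivative L) (at x) \<and> inj L))"

definition tangent_vectors :: "'e::real_normed_vector set \<Rightarrow> 'e \<Rightarrow> 'e set" where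
  "tangent_vectors M p =
     {w. \<exists>c. (\<forall>r. c r \<in> M) \<and> c 0 = p \<and> (c has_vector_derivative w) (at 0)}"

text \<open>canonical symplectic form d sigma /\ ds + d tau /\ dt on T*R^2,
  coordinates (s,t,sigma,tau)\<close>
fun sympl :: "R4 \<Rightarrow> R4 \<Rightarrow> real" where
  "sympl (a1, b1, c1, d1) (a2, b2, c2, d2) = c1 * a2 - c2 * a1 + d1 * b2 - d2 * b1"

fun twisted_form :: "pt \<Rightarrow> pt \<Rightarrow> real" where
  "twisted_form (y1, x1) (y2, x2) = sympl y1 y2 - sympl x1 x2"

definition cotangent_nonzero :: "(real \<times> real) set \<Rightarrow> (real \<times> real) set \<Rightarrow> pt set" where
  "cotangent_nonzero Y X =
     {((s, t, \<sigma>, \<tau>), (u, v, \<xi>, \<eta>)). (s, t) \<in> Y \<and> (u, v) \<in> X \<and> (\<sigma>, \<tau>, \<xi>, \<eta>) \<noteq> 0}"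

fun fiber_scale :: "real \<Rightarrow> pt \<Rightarrow> pt" where
  "fiber_scale l ((s, t, \<sigma>, \<tau>), (u, v, \<xi>, \<eta>)) = ((s, t, l * \<sigma>, l * \<tau>), (u, v, l * \<xi>, l * \<eta>))"

definition conic :: "pt set \<Rightarrow> bool" where
  "conic C \<longleftrightarrow> (\<forall>p\<in>C. \<forall>l>0. fiber_scale l p \<in> C)"

definition homogeneous_canonical_relation :: "(real \<times> real) set \<Rightarrow> (real \<times> real) set \<Rightarrow> pt set \<Rightarrow> bool" where
  "homogeneous_canonical_relation Y X C \<longleftrightarrow>
     C \<subseteq> cotangent_nonzero Y X \<and>
     closedin (top_of_set (cotangent_nonzero Y X)) C \<and>
     conic C \<and> submanifold4 C \<and>
     (\<forall>p\<in>C. \<forall>w1\<in>tangent_vectors C p. \<forall>w2\<in>tangent_vectors C p. twisted_form w1 w2 = 0)"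

definition locally_graph_type :: "pt set \<Rightarrow> pt \<Rightarrow> bool" where
  "locally_graph_type C p \<longleftrightarrow>
     dim (fst ` tangent_vectors C p) = DIM(R4) \<and> dim (snd ` tangent_vectors C p) = DIM(R4)"

definition parallel2 :: "real \<times> real \<Rightarrow> real \<times> real \<Rightarrow> bool" where
  "parallel2 a b \<longleftrightarrow> (\<exists>x y. (x, y) \<noteq> (0, 0) \<and> x *\<^sub>R a + y *\<^sub>R b = 0)"

definition Rv :: "(real \<times> real \<Rightarrow> real^3) \<Rightarrow> (real \<Rightarrow> real^3) \<Rightarrow> real \<Rightarrow> real \<Rightarrow> real \<Rightarrow> real^3" where
  "Rv \<psi> \<gamma> u v s = \<psi> (u, v) - \<gamma> s"

definition Rhat :: "(real \<times> real \<Rightarrow> real^3) \<Rightarrow> (real \<Rightarrow> real^3) \<Rightarrow> real \<Rightarrow> real \<Rightarrow> real \<Rightarrow> real^3" where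
  "Rhat \<psi> \<gamma> u v s = (1 / norm (Rv \<psi> \<gamma> u v s)) *\<^sub>R Rv \<psi> \<gamma> u v s"

definition psi_u :: "(real \<times> real \<Rightarrow> real^3) \<Rightarrow> real \<Rightarrow> real \<Rightarrow> real^3" where
  "psi_u \<psi> u v = vector_derivative (\<lambda>h. \<psi> (u + h, v)) (at 0)"

definition psi_v :: "(real \<times> real \<Rightarrow> real^3) \<Rightarrow> real \<Rightarrow> real \<Rightarrow> real^3" where
  "psi_v \<psi> u v = vector_derivative (\<lambda>h. \<psi> (u, v + h)) (at 0)"

definition gdot :: "(real \<Rightarrow> real^3) \<Rightarrow> real \<Rightarrow> real^3" where
  "gdot \<gamma> s = vector_derivative \<gamma> (at s)"

definition unit_normal :: "(real \<times> real \<Rightarrow> real^3) \<Rightarrow> real \<Rightarrow> real \<Rightarrow> real^3" where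
  "unit_normal \<psi> u v = (1 / norm (cross3 (psi_u \<psi> u v) (psi_v \<psi> u v))) *\<^sub>R cross3 (psi_u \<psi> u v) (psi_v \<psi> u v)"

text \<open>pi_{T Psi} Rhat, expressed in the coordinates (u,v): the tangential projection
  P = Rhat - (Rhat . n) n paired with the coordinate tangent vectors psi_u, psi_v
  (the components of the covector it defines in the basis du, dv).\<close>
definition piT :: "(real \<times> real \<Rightarrow> real^3) \<Rightarrow> (real \<Rightarrow> real^3) \<Rightarrow> real \<Rightarrow> real \<Rightarrow> real \<Rightarrow> real \<times> real" where
  "piT \<psi> \<gamma> u v s =
     (let P = Rhat \<psi> \<gamma> u v s - (Rhat \<psi> \<gamma> u v s \<bullet> unit_normal \<psi> u v) *\<^sub>R unit_normal \<psi> u v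
      in (P \<bullet> psi_u \<psi> u v, P \<bullet> psi_v \<psi> u v))"

definition Yset :: "real \<Rightarrow> real \<Rightarrow> real \<Rightarrow> real \<Rightarrow> (real \<times> real) set" where
  "Yset s1 s2 t1 t2 = {s1<..<s2} \<times> {t1<..<t2}"

definition Xset :: "(real \<times> real \<Rightarrow> real^3) \<Rightarrow> (real \<Rightarrow> real^3) \<Rightarrow> real \<Rightarrow> real \<Rightarrow> real \<Rightarrow> real \<Rightarrow> real \<Rightarrow> (real \<times> real) set \<Rightarrow> (real \<times> real) set" where
  "Xset \<psi> \<gamma> c0 s1 s2 t1 t2 D =
     {(u, v). (u, v) \<in> D \<and> (\<exists>s\<in>{s1<..<s2}. 2 / c0 * norm (\<psi> (u, v) - \<gamma> s) \<in> {t1<..<t2})}"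

definition Lambda :: "(real \<times> real \<Rightarrow> real^3) \<Rightarrow> (real \<Rightarrow> real^3) \<Rightarrow> real \<Rightarrow> real \<Rightarrow> real \<Rightarrow> real \<Rightarrow> real \<Rightarrow> (real \<times> real) set \<Rightarrow> pt set" where
  "Lambda \<psi> \<gamma> c0 s1 s2 t1 t2 D =
     {((s, t, \<sigma>, \<tau>), (u, v, \<xi>, \<eta>)).
        (s, t) \<in> Yset s1 s2 t1 t2 \<and> (u, v) \<in> Xset \<psi> \<gamma> c0 s1 s2 t1 t2 D \<and>
        t = 2 / c0 * norm (Rv \<psi> \<gamma> u v s) \<and>
        \<sigma> = 2 * \<tau> / c0 * (Rhat \<psi> \<gamma> u v s \<bullet> gdot \<gamma> s) \<and>
        (\<xi>, \<eta>) = - (2 * \<tau> / c0) *\<^sub>R piT \<psi> \<gamma> u v s}"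

definition Lambda' :: "(real \<times> real \<Rightarrow> real^3) \<Rightarrow> (real \<Rightarrow> real^3) \<Rightarrow> real \<Rightarrow> real \<Rightarrow> real \<Rightarrow> real \<Rightarrow> real \<Rightarrow> (real \<times> real) set \<Rightarrow> pt set" where
  "Lambda' \<psi> \<gamma> c0 s1 s2 t1 t2 D =
     {((s, t, \<sigma>, \<tau>), (u, v, \<xi>, \<eta>)). ((s, t, \<sigma>, \<tau>), (u, v, - \<xi>, - \<eta>)) \<in> Lambda \<psi> \<gamma> c0 s1 s2 t1 t2 D}"

definition grad_uv :: "(real \<Rightarrow> real \<Rightarrow> real) \<Rightarrow> real \<Rightarrow> real \<Rightarrow> real \<times> real" where
  "grad_uv g u v = (deriv (\<lambda>h. g (u + h) v) 0, deriv (\<lambda>h. g u (v + h)) 0)"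

definition ds_piT :: "(real \<times> real \<Rightarrow> real^3) \<Rightarrow> (real \<Rightarrow> real^3) \<Rightarrow> real \<Rightarrow> real \<Rightarrow> real \<Rightarrow> real \<times> real" where
  "ds_piT \<psi> \<gamma> u v s =
     (deriv (\<lambda>h. fst (piT \<psi> \<gamma> u v (s + h))) 0, deriv (\<lambda>h. snd (piT \<psi> \<gamma> u v (s + h))) 0)"

definition Sigma1 :: "(real \<times> real \<Rightarrow> real^3) \<Rightarrow> (real \<Rightarrow> real^3) \<Rightarrow> real \<Rightarrow> real \<Rightarrow> real \<Rightarrow> real \<Rightarrow> real \<Rightarrow> (real \<times> real) set \<Rightarrow> pt set" where
  "Sigma1 \<psi> \<gamma> c0 s1 s2 t1 t2 D =
     {((s, t, \<sigma>, \<tau>), (u, v, \<xi>, \<eta>)).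
        parallel2 (piT \<psi> \<gamma> u v s) (grad_uv (\<lambda>u' v'. Rhat \<psi> \<gamma> u' v' s \<bullet> gdot \<gamma> s) u v)}
     \<inter> Lambda' \<psi> \<gamma> c0 s1 s2 t1 t2 D"

definition Sigma2 :: "(real \<times> real \<Rightarrow> real^3) \<Rightarrow> (real \<Rightarrow> real^3) \<Rightarrow> real \<Rightarrow> real \<Rightarrow> real \<Rightarrow> real \<Rightarrow> real \<Rightarrow> (real \<times> real) set \<Rightarrow> pt set" where
  "Sigma2 \<psi> \<gamma> c0 s1 s2 t1 t2 D =
     {((s, t, \<sigma>, \<tau>), (u, v, \<xi>, \<eta>)). parallel2 (piT \<psi> \<gamma> u v s) (ds_piT \<psi> \<gamma> u v s)}
     \<inter> Lambda' \<psi> \<gamma> c0 s1 s2 t1 t2 D"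

end

theory Submission
  imports Defs
begin


lemma Basis_R4: "(Basis :: R4 set) = {(1,0,0,0),(0,1,0,0),(0,0,1,0),(0,0,0,1)}"
  by (simp add: Basis_prod_def zero_prod_def image_Un insert_commute)

lemma Basis_R2: "(Basis :: (real\<times>real) set) = {(1,0),(0,1)}"
  by (simp add: Basis_prod_def zero_prod_def image_Un insert_commute)

lemma ev_line_in_open:
  fixes x b :: "'a::real_normed_vector"
  assumes "open S" "x \<in> S"
  shows "eventually (\<lambda>h::real. x + h *\<^sub>R b \<in> S) (nhds 0)"
proof -
  have c: "continuous_on UNIV (\<lambda>h::real. x + h *\<^sub>R b)"
    by (intro continuous_on_add continuous_on_const continuous_on_scaleR continuous_on_id)
  have o: "open ((\<lambda>h::real. x + h *\<^sub>R b) -` S)"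
    by (rule open_vimage[OF assms(1) c])
  have m: "(0::real) \<in> (\<lambda>h::real. x + h *\<^sub>R b) -` S" using assms by simp
  show ?thesis using eventually_nhds_in_open[OF o m] by simp
qed

definition Dd :: "'a::real_normed_vector \<Rightarrow> ('a \<Rightarrow> real) \<Rightarrow> 'a \<Rightarrow> real" where
  "Dd b f x = deriv (\<lambda>h. f (x + h *\<^sub>R b)) 0"

definition uv :: "R4 \<Rightarrow> real \<times> real" where "uv x = (fst (snd x), fst (snd (snd x)))"

inductive KK :: "(real \<times> real \<Rightarrow> real^3) \<Rightarrow> (real \<Rightarrow> real^3) \<Rightarrow> R4 set \<Rightarrow> R4 set \<Rightarrow> (R4 \<Rightarrow> real) \<Rightarrow> bool" for \<psi> \<gamma> A0 S where
  Kconst: "KK \<psi> \<gamma> A0 S (\<lambda>x. c)"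
| Klin: "KK \<psi> \<gamma> A0 S (\<lambda>x. x \<bullet> w)"
| Kadd: "KK \<psi> \<gamma> A0 S f \<Longrightarrow> KK \<psi> \<gamma> A0 S g \<Longrightarrow> KK \<psi> \<gamma> A0 S (\<lambda>x. f x + g x)"
| Kmult: "KK \<psi> \<gamma> A0 S f \<Longrightarrow> KK \<psi> \<gamma> A0 S g \<Longrightarrow> KK \<psi> \<gamma> A0 S (\<lambda>x. f x * g x)"
| Kinv: "KK \<psi> \<gamma> A0 S f \<Longrightarrow> (\<forall>x\<in>S. f x \<noteq> 0) \<Longrightarrow> KK \<psi> \<gamma> A0 S (\<lambda>x. inverse (f x))"
| Ksqrt: "KK \<psi> \<gamma> A0 S f \<Longrightarrow> (\<forall>x\<in>S. f x > 0) \<Longrightarrow> KK \<psi> \<gamma> A0 S (\<lambda>x. sqrt (f x))"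
| Kpsi: "S \<subseteq> A0 \<Longrightarrow> set bs \<subseteq> Basis \<Longrightarrow> e \<in> Basis \<Longrightarrow>
         KK \<psi> \<gamma> A0 S (\<lambda>x. iter_dderiv bs (\<lambda>y. \<psi> y \<bullet> e) (uv x))"
| Kgam: "S \<subseteq> A0 \<Longrightarrow> set bs \<subseteq> Basis \<Longrightarrow> e \<in> Basis \<Longrightarrow>
         KK \<psi> \<gamma> A0 S (\<lambda>x. iter_dderiv bs (\<lambda>y. \<gamma> y \<bullet> e) (fst x))"
| Kcong: "KK \<psi> \<gamma> A0 S g \<Longrightarrow> (\<forall>x\<in>S. f x = g x) \<Longrightarrow> KK \<psi> \<gamma> A0 S f"

locale sar =
  fixes \<psi> :: "real \<times> real \<Rightarrow> real^3" and \<gamma> :: "real \<Rightarrow> real^3"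
    and D :: "(real \<times> real) set" and c0 s1 s2 t1 t2 :: real
  assumes c0: "c0 > 0"
    and D_open: "open D"
    and psi_smooth: "smooth_on_set D \<psi>"
    and psi_imm: "\<forall>x\<in>D. \<exists>L. (\<psi> has_derivative L) (at x) \<and> inj L"
    and gamma_smooth: "smooth_on_set {s1<..<s2} \<gamma>"
    and dist_pos: "\<exists>\<delta>>0. \<forall>x\<in>D. \<forall>s\<in>{s1<..<s2}. \<delta> \<le> dist (\<psi> x) (\<gamma> s)"
begin

definition A0 :: "R4 set" where "A0 = {x. fst x \<in> {s1<..<s2} \<and> uv x \<in> D}"

lemma open_A0: "open A0"
proof -
  have e: "A0 = (fst -` {s1<..<s2}) \<inter> (uv -` D)" by (auto simp: A0_def)
  have c: "continuous_on UNIV uv" unfolding uv_def by (intro continuous_intros)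
  have "open (fst -` {s1<..<s2} :: R4 set)" by (rule open_vimage_fst) simp
  moreover have "open (uv -` D)" by (rule open_vimage[OF D_open c])
  ultimately show ?thesis unfolding e by (rule open_Int)
qed

abbreviation "K \<equiv> KK \<psi> \<gamma> A0"

lemma psi_cont: "set bs \<subseteq> Basis \<Longrightarrow> e \<in> Basis \<Longrightarrow> continuous_on D (iter_dderiv bs (\<lambda>y. \<psi> y \<bullet> e))"
  using psi_smooth[unfolded smooth_on_set_def, rule_format, THEN conjunct1] by blast

lemma psi_dd: "set bs \<subseteq> Basis \<Longrightarrow> e \<in> Basis \<Longrightarrow> b \<in> Basis \<Longrightarrow> p \<in> D \<Longrightarrow>
   ((\<lambda>h. iter_dderiv bs (\<lambda>y. \<psi> y \<bullet> e) (p + h *\<^sub>R b)) has_real_derivative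
       iter_dderiv (b # bs) (\<lambda>y. \<psi> y \<bullet> e) p) (at 0)"
proof -
  assume a: "set bs \<subseteq> Basis" "e \<in> Basis" "b \<in> Basis" "p \<in> D"
  then have "(\<lambda>h. iter_dderiv bs (\<lambda>y. \<psi> y \<bullet> e) (p + h *\<^sub>R b)) differentiable (at 0)"
    using psi_smooth[unfolded smooth_on_set_def, rule_format, THEN conjunct2, rule_format] a by blast
  then show ?thesis by (simp add: DERIV_deriv_iff_real_differentiable)
qed

lemma gam_cont: "set bs \<subseteq> Basis \<Longrightarrow> e \<in> Basis \<Longrightarrow> continuous_on {s1<..<s2} (iter_dderiv bs (\<lambda>y. \<gamma> y \<bullet> e))"
  using gamma_smooth[unfolded smooth_on_set_def, rule_format, THEN conjunct1] by blast

lemma gam_dd: "set bs \<subseteq> Basis \<Longrightarrow> e \<in> Basis \<Longrightarrow> p \<in> {s1<..<s2} \<Longrightarrow>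
   ((\<lambda>h. iter_dderiv bs (\<lambda>y. \<gamma> y \<bullet> e) (p + h)) has_real_derivative
       iter_dderiv (1 # bs) (\<lambda>y. \<gamma> y \<bullet> e) p) (at 0)"
proof -
  assume a: "set bs \<subseteq> Basis" "e \<in> Basis" "p \<in> {s1<..<s2}"
  then have "(\<lambda>h. iter_dderiv bs (\<lambda>y. \<gamma> y \<bullet> e) (p + h *\<^sub>R 1)) differentiable (at 0)"
    using gamma_smooth[unfolded smooth_on_set_def, rule_format, THEN conjunct2, rule_format, of e bs 1 p] a by simp
  then show ?thesis by (simp add: DERIV_deriv_iff_real_differentiable)
qed

end

lemma R2_diff:
  fixes g g1 g2 :: "real \<times> real \<Rightarrow> real"
  assumes D: "open D" and p: "p \<in> D"
    and d1: "\<And>q. q \<in> D \<Longrightarrow> ((\<lambda>h. g (q + h *\<^sub>R (1,0))) has_real_derivative g1 q) (at 0)"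
    and d2: "\<And>q. q \<in> D \<Longrightarrow> ((\<lambda>h. g (q + h *\<^sub>R (0,1))) has_real_derivative g2 q) (at 0)"
    and c2: "continuous_on D g2"
  shows "g differentiable (at p)"
proof -
  obtain a c where pac: "p = (a, c)" by (cases p)
  obtain r where r: "r > 0" "ball p r \<subseteq> D" using D p open_contains_ball by blast
  define X where "X = ball a (r/2)"
  define Y where "Y = ball c (r/2)"
  have XY: "x \<in> X \<Longrightarrow> y \<in> Y \<Longrightarrow> (x, y) \<in> D" for x y
  proof -
    assume "x \<in> X" "y \<in> Y"
    then have "dist x a < r/2" "dist y c < r/2" by (auto simp: X_def Y_def dist_commute)
    moreover have "dist (x, y) (a, c) \<le> dist (x, y) (a, y) + dist (a, y) (a, c)" by (rule dist_triangle)
    moreover have "dist (x, y) (a, y) = dist x a" "dist (a, y) (a, c) = dist y c" by (simp_all add: dist_Pair_Pair)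
    ultimately have "dist (x, y) (a, c) < r" by linarith
    then show ?thesis using r pac by (auto simp: dist_commute)
  qed
  have fx: "((\<lambda>x. g (x, c)) has_derivative (\<lambda>t. g1 p * t)) (at a within X)"
  proof -
    have "((\<lambda>h. g (p + h *\<^sub>R (1,0))) has_real_derivative g1 p) (at 0)" by (rule d1[OF p])
    then have "((\<lambda>h. g (h + a, c)) has_real_derivative g1 p) (at 0)" by (simp add: pac add.commute)
    then have "((\<lambda>x. g (x, c)) has_real_derivative g1 p) (at (0 + a))"
      using DERIV_shift[of "\<lambda>x. g (x, c)" "g1 p" 0 a] by simp
    then show ?thesis by (simp add: has_field_derivative_def has_derivative_at_withinI)
  qed
  have fy: "((\<lambda>y. g (x, y)) has_derivative blinfun_apply (blinfun_mult_left (g2 (x, y)))) (at y within Y)"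
    if "x \<in> X" "y \<in> Y" for x y
  proof -
    have q: "(x, y) \<in> D" using XY that by blast
    have "((\<lambda>h. g ((x, y) + h *\<^sub>R (0,1))) has_real_derivative g2 (x, y)) (at 0)" by (rule d2[OF q])
    then have "((\<lambda>h. g (x, h + y)) has_real_derivative g2 (x, y)) (at 0)" by (simp add: add.commute)
    then have "((\<lambda>h. g (x, h)) has_real_derivative g2 (x, y)) (at (0 + y))"
      using DERIV_shift[of "\<lambda>h. g (x, h)" "g2 (x, y)" 0 y] by simp
    moreover have "(\<lambda>t. t * g2 (x, y)) = (*) (g2 (x, y))" by (auto simp: fun_eq_iff)
    ultimately have "((\<lambda>h. g (x, h)) has_derivative (\<lambda>t. t * g2 (x, y))) (at y)"
      by (simp add: has_field_derivative_def)
    then show ?thesis by (simp add: has_derivative_at_withinI)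
  qed
  have fyc: "continuous (at (a, c) within X \<times> Y) (\<lambda>(x, y). blinfun_mult_left (g2 (x, y)))"
  proof (rule continuous_blinfun_componentwiseI1)
    fix i :: real
    have "isCont g2 (a, c)" using c2 p pac D continuous_on_eq_continuous_at by blast
    then have "continuous (at (a, c) within X \<times> Y) g2" using continuous_at_imp_continuous_within by blast
    moreover have "(\<lambda>x. blinfun_apply (case x of (x, y) \<Rightarrow> blinfun_mult_left (g2 (x, y))) i) = (\<lambda>x. i * g2 x)"
      by (auto simp: fun_eq_iff split: prod.splits)
    ultimately show "continuous (at (a, c) within X \<times> Y) (\<lambda>x. blinfun_apply (case x of (x, y) \<Rightarrow> blinfun_mult_left (g2 (x, y))) i)"
      by (simp add: continuous_mult continuous_const)
  qed
  have cY: "c \<in> Y" using r by (simp add: Y_def)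
  have "((\<lambda>(x, y). g (x, y)) has_derivative (\<lambda>(tx, ty). g1 p * tx + blinfun_apply (blinfun_mult_left (g2 (a, c))) ty)) (at (a, c) within X \<times> Y)"
    by (rule has_derivative_partialsI[OF fx fy fyc cY convex_ball[of c "r/2", folded Y_def]])
  moreover have o: "open (X \<times> Y)" by (simp add: X_def Y_def open_Times)
  moreover have m: "(a, c) \<in> X \<times> Y" using r by (simp add: X_def Y_def)
  moreover have "at (a, c) within X \<times> Y = at (a, c)" by (rule at_within_open[OF m o])
  moreover have "(\<lambda>(x, y). g (x, y)) = g" by auto
  ultimately have "(g has_derivative (\<lambda>(tx, ty). g1 p * tx + blinfun_apply (blinfun_mult_left (g2 (a, c))) ty)) (at (a, c))"
    by metis
  then show ?thesis using pac differentiableI by blast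
qed


lemma bl_uv: "bounded_linear uv"
  unfolding uv_def
  by (intro bounded_linear_Pair bounded_linear_compose[OF bounded_linear_fst bounded_linear_snd]
      bounded_linear_compose[OF bounded_linear_fst bounded_linear_compose[OF bounded_linear_snd bounded_linear_snd]])

lemma uv_add: "uv (x + h *\<^sub>R b) = uv x + h *\<^sub>R uv b"
  by (simp add: uv_def)

lemma uv_Basis: "b \<in> (Basis :: R4 set) \<Longrightarrow> uv b = 0 \<or> uv b \<in> Basis"
  by (auto simp: Basis_R4 Basis_R2 uv_def zero_prod_def)

lemma fst_Basis: "b \<in> (Basis :: R4 set) \<Longrightarrow> fst b = 0 \<or> fst b = 1"
  by (auto simp: Basis_R4)

context sar
begin

lemma K_props:
  assumes "K S f" "open S"
  shows "continuous_on S f \<and> (\<forall>x\<in>S. f differentiable (at x)) \<and>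
    (\<forall>b\<in>Basis. \<exists>g. K S g \<and> (\<forall>x\<in>S. ((\<lambda>h. f (x + h *\<^sub>R b)) has_real_derivative g x) (at 0)))"
  using assms(1)
proof (induction rule: KK.induct)
  case (Kconst c)
  show ?case by (auto intro!: exI[of _ "\<lambda>x. 0"] KK.Kconst)
next
  case (Klin w)
  have c: "continuous_on S (\<lambda>x. x \<bullet> w)" by (intro continuous_on_inner continuous_on_id continuous_on_const)
  have d: "(\<lambda>x. x \<bullet> w) differentiable (at x)" for x :: R4
    by (rule bounded_linear_imp_differentiable) (rule bounded_linear_inner_left)
  have "((\<lambda>h. (x + h *\<^sub>R b) \<bullet> w) has_real_derivative b \<bullet> w) (at 0)" for x b :: R4
  proof -
    have "(\<lambda>h. (x + h *\<^sub>R b) \<bullet> w) = (\<lambda>h. x \<bullet> w + h * (b \<bullet> w))" by (simp add: inner_add_left)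
    moreover have "((\<lambda>h. x \<bullet> w + h * (b \<bullet> w)) has_real_derivative b \<bullet> w) (at 0)"
      by (auto intro!: derivative_eq_intros)
    ultimately show ?thesis by simp
  qed
  then have "\<forall>b\<in>Basis. \<exists>g. K S g \<and> (\<forall>x\<in>S. ((\<lambda>h. (x + h *\<^sub>R b) \<bullet> w) has_real_derivative g x) (at 0))"
    by (blast intro: KK.Kconst)
  then show ?case using c d by blast
next
  case (Kadd f g)
  from Kadd.IH have c: "continuous_on S (\<lambda>x. f x + g x)" by (intro continuous_on_add) auto
  from Kadd.IH have d: "\<forall>x\<in>S. (\<lambda>x. f x + g x) differentiable (at x)" by auto
  have "\<exists>h. K S h \<and> (\<forall>x\<in>S. ((\<lambda>t. f (x + t *\<^sub>R b) + g (x + t *\<^sub>R b)) has_real_derivative h x) (at 0))"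
    if b: "b \<in> Basis" for b
  proof -
    obtain gf where gf: "K S gf" "\<forall>x\<in>S. ((\<lambda>h. f (x + h *\<^sub>R b)) has_real_derivative gf x) (at 0)" using Kadd.IH b by blast
    obtain gg where gg: "K S gg" "\<forall>x\<in>S. ((\<lambda>h. g (x + h *\<^sub>R b)) has_real_derivative gg x) (at 0)" using Kadd.IH b by blast
    show ?thesis using gf gg by (intro exI[of _ "\<lambda>x. gf x + gg x"]) (auto intro: KK.Kadd DERIV_add)
  qed
  then show ?case using c d by blast
next
  case (Kmult f g)
  from Kmult.IH have c: "continuous_on S (\<lambda>x. f x * g x)" by (intro continuous_on_mult) auto
  from Kmult.IH have d: "\<forall>x\<in>S. (\<lambda>x. f x * g x) differentiable (at x)" by auto
  have "\<exists>h. K S h \<and> (\<forall>x\<in>S. ((\<lambda>t. f (x + t *\<^sub>R b) * g (x + t *\<^sub>R b)) has_real_derivative h x) (at 0))"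
    if b: "b \<in> Basis" for b
  proof -
    obtain gf where gf: "K S gf" "\<forall>x\<in>S. ((\<lambda>h. f (x + h *\<^sub>R b)) has_real_derivative gf x) (at 0)" using Kmult.IH b by blast
    obtain gg where gg: "K S gg" "\<forall>x\<in>S. ((\<lambda>h. g (x + h *\<^sub>R b)) has_real_derivative gg x) (at 0)" using Kmult.IH b by blast
    have "((\<lambda>t. f (x + t *\<^sub>R b) * g (x + t *\<^sub>R b)) has_real_derivative gf x * g x + f x * gg x) (at 0)" if "x \<in> S" for x
      using DERIV_mult'[OF gf(2)[rule_format, OF that] gg(2)[rule_format, OF that]] by (simp add: algebra_simps)
    moreover have "K S (\<lambda>x. gf x * g x + f x * gg x)"
      using gf gg Kmult.hyps by (intro KK.Kadd KK.Kmult)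
    ultimately show ?thesis by blast
  qed
  then show ?case using c d by blast
next
  case (Kinv f)
  from Kinv.IH Kinv.hyps have c: "continuous_on S (\<lambda>x. inverse (f x))" by (intro continuous_on_inverse) auto
  from Kinv.IH Kinv.hyps have d: "\<forall>x\<in>S. (\<lambda>x. inverse (f x)) differentiable (at x)" by auto
  have "\<exists>h. K S h \<and> (\<forall>x\<in>S. ((\<lambda>t. inverse (f (x + t *\<^sub>R b))) has_real_derivative h x) (at 0))"
    if b: "b \<in> Basis" for b
  proof -
    obtain gf where gf: "K S gf" "\<forall>x\<in>S. ((\<lambda>h. f (x + h *\<^sub>R b)) has_real_derivative gf x) (at 0)" using Kinv.IH b by blast
    have "((\<lambda>t. inverse (f (x + t *\<^sub>R b))) has_real_derivative (-1) * (gf x * (inverse (f x) * inverse (f x)))) (at 0)" if "x \<in> S" for x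
      using DERIV_inverse_fun[OF gf(2)[rule_format, OF that]] Kinv.hyps that
      by (simp add: power2_eq_square)
    moreover have "K S (\<lambda>x. (-1) * (gf x * (inverse (f x) * inverse (f x))))"
      using gf Kinv.hyps by (intro KK.Kmult KK.Kconst KK.Kinv) auto
    ultimately show ?thesis by blast
  qed
  then show ?case using c d by blast
next
  case (Ksqrt f)
  from Ksqrt.IH Ksqrt.hyps have c: "continuous_on S (\<lambda>x. sqrt (f x))" by (intro continuous_on_real_sqrt) auto
  have d: "\<forall>x\<in>S. (\<lambda>x. sqrt (f x)) differentiable (at x)"
  proof
    fix x assume x: "x \<in> S"
    have "(sqrt has_real_derivative inverse (sqrt (f x)) / 2) (at (f x))"
      using DERIV_real_sqrt Ksqrt.hyps x by blast
    then have "sqrt differentiable (at (f x))"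
      unfolding has_field_derivative_def by (rule differentiableI)
    then show "(\<lambda>x. sqrt (f x)) differentiable (at x)"
      by (rule differentiable_compose) (use Ksqrt.IH x in blast)
  qed
  have "\<exists>h. K S h \<and> (\<forall>x\<in>S. ((\<lambda>t. sqrt (f (x + t *\<^sub>R b))) has_real_derivative h x) (at 0))"
    if b: "b \<in> Basis" for b
  proof -
    obtain gf where gf: "K S gf" "\<forall>x\<in>S. ((\<lambda>h. f (x + h *\<^sub>R b)) has_real_derivative gf x) (at 0)" using Ksqrt.IH b by blast
    have "((\<lambda>t. sqrt (f (x + t *\<^sub>R b))) has_real_derivative gf x * (inverse (sqrt (f x)) * (1/2))) (at 0)" if "x \<in> S" for x
    proof -
      have "(sqrt has_real_derivative inverse (sqrt (f x)) / 2) (at (f (x + 0 *\<^sub>R b)))"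
        using DERIV_real_sqrt Ksqrt.hyps that by simp
      from DERIV_chain2[OF this gf(2)[rule_format, OF that]] show ?thesis by (simp add: mult.commute)
    qed
    moreover have "K S (\<lambda>x. gf x * (inverse (sqrt (f x)) * (1/2)))"
      using gf Ksqrt.hyps by (intro KK.Kmult KK.Kconst KK.Kinv KK.Ksqrt) auto
    ultimately show ?thesis by blast
  qed
  then show ?case using c d by blast
next
  case (Kpsi bs e)
  let ?G = "iter_dderiv bs (\<lambda>y. \<psi> y \<bullet> e)"
  have uvS: "uv ` S \<subseteq> D" using Kpsi.hyps by (auto simp: A0_def)
  have c: "continuous_on S (\<lambda>x. ?G (uv x))"
    by (rule continuous_on_compose2[OF psi_cont[OF Kpsi.hyps(2,3)] linear_continuous_on[OF bl_uv] uvS])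
  have d: "\<forall>x\<in>S. (\<lambda>x. ?G (uv x)) differentiable (at x)"
  proof
    fix x assume x: "x \<in> S"
    have b1: "set ((1,0) # bs) \<subseteq> Basis" "set ((0,1) # bs) \<subseteq> Basis" using Kpsi.hyps by (auto simp: Basis_R2)
    have B1: "(1,0) \<in> (Basis :: (real\<times>real) set)" and B2: "(0,1) \<in> (Basis :: (real\<times>real) set)"
      by (simp_all add: Basis_R2)
    have ux: "uv x \<in> D" using x uvS by blast
    have "?G differentiable (at (uv x))"
      by (rule R2_diff[OF D_open ux psi_dd[OF Kpsi.hyps(2,3) B1] psi_dd[OF Kpsi.hyps(2,3) B2] psi_cont[OF b1(2) Kpsi.hyps(3)]])
    then show "(\<lambda>x. ?G (uv x)) differentiable (at x)"
      by (rule differentiable_compose) (rule bounded_linear_imp_differentiable[OF bl_uv])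
  qed
  have "\<exists>h. K S h \<and> (\<forall>x\<in>S. ((\<lambda>t. ?G (uv (x + t *\<^sub>R b))) has_real_derivative h x) (at 0))"
    if b: "b \<in> Basis" for b
  proof (cases "uv b = 0")
    case True
    then show ?thesis by (intro exI[of _ "\<lambda>x. 0"]) (auto simp: uv_add intro: KK.Kconst)
  next
    case False
    then have ub: "uv b \<in> Basis" using uv_Basis b by blast
    have "((\<lambda>t. ?G (uv (x + t *\<^sub>R b))) has_real_derivative iter_dderiv (uv b # bs) (\<lambda>y. \<psi> y \<bullet> e) (uv x)) (at 0)"
      if "x \<in> S" for x
      using psi_dd[OF Kpsi.hyps(2,3) ub, of "uv x"] that uvS by (auto simp: uv_add)
    moreover have "K S (\<lambda>x. iter_dderiv (uv b # bs) (\<lambda>y. \<psi> y \<bullet> e) (uv x))"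
      using Kpsi.hyps ub by (intro KK.Kpsi) auto
    ultimately show ?thesis by blast
  qed
  then show ?case using c d by blast
next
  case (Kgam bs e)
  let ?G = "iter_dderiv bs (\<lambda>y. \<gamma> y \<bullet> e)"
  have fS: "fst ` S \<subseteq> {s1<..<s2}" using Kgam.hyps by (auto simp: A0_def)
  have c: "continuous_on S (\<lambda>x. ?G (fst x))"
    by (rule continuous_on_compose2[OF gam_cont[OF Kgam.hyps(2,3)] continuous_on_fst[OF continuous_on_id] fS])
  have d: "\<forall>x\<in>S. (\<lambda>x. ?G (fst x)) differentiable (at x)"
  proof
    fix x :: R4 assume x: "x \<in> S"
    have "((\<lambda>h. ?G (h + fst x)) has_real_derivative iter_dderiv (1 # bs) (\<lambda>y. \<gamma> y \<bullet> e) (fst x)) (at 0)"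
      using gam_dd[OF Kgam.hyps(2,3), of "fst x"] x fS by (auto simp: add.commute)
    then have "(?G has_real_derivative iter_dderiv (1 # bs) (\<lambda>y. \<gamma> y \<bullet> e) (fst x)) (at (0 + fst x))"
      using DERIV_shift by blast
    then have "?G differentiable (at (fst x))"
      unfolding has_field_derivative_def by (auto intro: differentiableI)
    then show "(\<lambda>x. ?G (fst x)) differentiable (at x)"
      by (rule differentiable_compose) (rule bounded_linear_imp_differentiable[OF bounded_linear_fst])
  qed
  have "\<exists>h. K S h \<and> (\<forall>x\<in>S. ((\<lambda>t. ?G (fst (x + t *\<^sub>R b))) has_real_derivative h x) (at 0))"
    if b: "b \<in> Basis" for b
  proof (cases "fst b = 0")
    case True
    then show ?thesis by (intro exI[of _ "\<lambda>x. 0"]) (auto intro: KK.Kconst)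
  next
    case False
    then have ub: "fst b = 1" using fst_Basis b by blast
    have "((\<lambda>t. ?G (fst (x + t *\<^sub>R b))) has_real_derivative iter_dderiv (1 # bs) (\<lambda>y. \<gamma> y \<bullet> e) (fst x)) (at 0)"
      if "x \<in> S" for x
      using gam_dd[OF Kgam.hyps(2,3), of "fst x"] that fS ub by auto
    moreover have "K S (\<lambda>x. iter_dderiv (1 # bs) (\<lambda>y. \<gamma> y \<bullet> e) (fst x))"
      using Kgam.hyps by (intro KK.Kgam) (auto simp: Basis_real_def)
    ultimately show ?thesis by blast
  qed
  then show ?case using c d by blast
next
  case (Kcong g f)
  have c: "continuous_on S f" using Kcong.IH Kcong.hyps continuous_on_cong by fastforce
  have d: "\<forall>x\<in>S. f differentiable (at x)"
  proof
    fix x assume x: "x \<in> S"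
    then obtain L where "(g has_derivative L) (at x)" using Kcong.IH unfolding differentiable_def by blast
    then have "(f has_derivative L) (at x)"
      by (rule has_derivative_transform_within_open[OF _ assms(2) x]) (use Kcong.hyps in auto)
    then show "f differentiable (at x)" by (rule differentiableI)
  qed
  have "\<exists>h. K S h \<and> (\<forall>x\<in>S. ((\<lambda>t. f (x + t *\<^sub>R b)) has_real_derivative h x) (at 0))"
    if b: "b \<in> Basis" for b
  proof -
    obtain gg where gg: "K S gg" "\<forall>x\<in>S. ((\<lambda>h. g (x + h *\<^sub>R b)) has_real_derivative gg x) (at 0)" using Kcong.IH b by blast
    have "((\<lambda>t. f (x + t *\<^sub>R b)) has_real_derivative gg x) (at 0)" if x: "x \<in> S" for x
    proof -
      have "eventually (\<lambda>t. x + t *\<^sub>R b \<in> S) (nhds 0)" by (rule ev_line_in_open[OF assms(2) x])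
      then have "eventually (\<lambda>t. g (x + t *\<^sub>R b) = f (x + t *\<^sub>R b)) (nhds 0)"
        by (rule eventually_mono) (use Kcong.hyps in auto)
      then show ?thesis using gg(2) x DERIV_cong_ev[of 0 0 "\<lambda>t. g (x + t *\<^sub>R b)" "\<lambda>t. f (x + t *\<^sub>R b)" "gg x" "gg x"] by blast
    qed
    then show ?thesis using gg by blast
  qed
  then show ?case using c d by blast
qed

end


context sar
begin

lemma K_Dd:
  assumes "K S f" "open S" "b \<in> Basis"
  shows "K S (Dd b f)" "\<And>x. x \<in> S \<Longrightarrow> ((\<lambda>h. f (x + h *\<^sub>R b)) has_real_derivative Dd b f x) (at 0)"
proof -
  obtain g where g: "K S g" "\<forall>x\<in>S. ((\<lambda>h. f (x + h *\<^sub>R b)) has_real_derivative g x) (at 0)"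
    using K_props[OF assms(1,2)] assms(3) by blast
  have e: "\<forall>x\<in>S. Dd b f x = g x" using g(2) by (simp add: Dd_def DERIV_imp_deriv)
  show "K S (Dd b f)" by (rule KK.Kcong[OF g(1) e])
  show "((\<lambda>h. f (x + h *\<^sub>R b)) has_real_derivative Dd b f x) (at 0)" if "x \<in> S" for x
    using g(2) e that by simp
qed

lemma K_cont: "K S f \<Longrightarrow> open S \<Longrightarrow> continuous_on S f"
  using K_props by blast

lemma K_diff: "K S f \<Longrightarrow> open S \<Longrightarrow> x \<in> S \<Longrightarrow> f differentiable (at x)"
  using K_props by blast

lemma iter_K:
  assumes "K S f" "open S" "set bs \<subseteq> Basis"
  shows "\<exists>g. K S g \<and> (\<forall>x\<in>S. iter_dderiv bs f x = g x)"
  using assms(3)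
proof (induction bs)
  case Nil
  then show ?case using assms(1) by auto
next
  case (Cons b bs)
  then obtain g where g: "K S g" "\<forall>x\<in>S. iter_dderiv bs f x = g x" by auto
  have b: "b \<in> Basis" using Cons by auto
  have "iter_dderiv (b # bs) f x = Dd b g x" if x: "x \<in> S" for x
  proof -
    have "eventually (\<lambda>h. x + h *\<^sub>R b \<in> S) (nhds 0)" by (rule ev_line_in_open[OF assms(2) x])
    then have "eventually (\<lambda>h. iter_dderiv bs f (x + h *\<^sub>R b) = g (x + h *\<^sub>R b)) (nhds 0)"
      by (rule eventually_mono) (use g in auto)
    then show ?thesis by (simp add: Dd_def deriv_cong_ev)
  qed
  then show ?case using K_Dd(1)[OF g(1) assms(2) b] by blast
qed

lemma smooth_from_K:
  fixes \<phi> :: "R4 \<Rightarrow> 'b::euclidean_space"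
  assumes "\<And>c. c \<in> Basis \<Longrightarrow> K S (\<lambda>x. \<phi> x \<bullet> c)" "open S"
  shows "smooth_on_set S \<phi>"
  unfolding smooth_on_set_def
proof (intro ballI allI impI conjI)
  fix c :: 'b and bs :: "R4 list" and b :: R4 and x
  assume c: "c \<in> Basis" and bs: "set bs \<subseteq> Basis"
  obtain g where g: "K S g" "\<forall>x\<in>S. iter_dderiv bs (\<lambda>x. \<phi> x \<bullet> c) x = g x"
    using iter_K[OF assms(1)[OF c] assms(2) bs] by blast
  show "continuous_on S (iter_dderiv bs (\<lambda>x. \<phi> x \<bullet> c))"
    using K_cont[OF g(1) assms(2)] g(2) continuous_on_cong by fastforce
  assume b: "b \<in> Basis" and x: "x \<in> S"
  have "eventually (\<lambda>h. x + h *\<^sub>R b \<in> S) (nhds 0)" by (rule ev_line_in_open[OF assms(2) x])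
  then have ev: "eventually (\<lambda>h. g (x + h *\<^sub>R b) = iter_dderiv bs (\<lambda>x. \<phi> x \<bullet> c) (x + h *\<^sub>R b)) (nhds 0)"
    by (rule eventually_mono) (use g in auto)
  have "((\<lambda>h. g (x + h *\<^sub>R b)) has_real_derivative Dd b g x) (at 0)"
    by (rule K_Dd(2)[OF g(1) assms(2) b x])
  then have "((\<lambda>h. iter_dderiv bs (\<lambda>x. \<phi> x \<bullet> c) (x + h *\<^sub>R b)) has_real_derivative Dd b g x) (at 0)"
    using DERIV_cong_ev[OF refl ev refl] by blast
  then show "(\<lambda>h. iter_dderiv bs (\<lambda>x. \<phi> x \<bullet> c) (x + h *\<^sub>R b)) differentiable (at 0)"
    unfolding has_field_derivative_def by (rule differentiableI)
qed

lemma K_sum: "finite I \<Longrightarrow> (\<And>i. i \<in> I \<Longrightarrow> K S (F i)) \<Longrightarrow> K S (\<lambda>x. \<Sum>i\<in>I. F i x)"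
proof (induction I rule: finite_induct)
  case empty
  then show ?case by (simp add: KK.Kconst)
next
  case (insert a I)
  then show ?case by (simp add: KK.Kadd)
qed

lemma K_hasderiv:
  assumes "K S f" "open S" "x \<in> S"
  shows "(f has_derivative (\<lambda>a. fst a * Dd (1,0,0,0) f x + fst (snd a) * Dd (0,1,0,0) f x
             + fst (snd (snd a)) * Dd (0,0,1,0) f x + snd (snd (snd a)) * Dd (0,0,0,1) f x)) (at x)"
proof -
  obtain L where L: "(f has_derivative L) (at x)" using K_diff[OF assms] unfolding differentiable_def by blast
  have lin: "linear L" using L has_derivative_linear by blast
  have Lb: "L b = Dd b f x" if b: "b \<in> Basis" for b
  proof -
    have "((\<lambda>h::real. x + h *\<^sub>R b) has_derivative (\<lambda>h. h *\<^sub>R b)) (at 0)"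
      by (auto intro!: derivative_eq_intros)
    moreover have "(f has_derivative L) (at (x + 0 *\<^sub>R b))" using L by simp
    ultimately have "((\<lambda>h. f (x + h *\<^sub>R b)) has_derivative (\<lambda>h. L (h *\<^sub>R b))) (at 0)"
      by (rule has_derivative_compose)
    moreover have "(\<lambda>h. L (h *\<^sub>R b)) = (*) (L b)"
      using lin by (auto simp: fun_eq_iff linear_scale)
    ultimately have "((\<lambda>h. f (x + h *\<^sub>R b)) has_real_derivative L b) (at 0)"
      by (simp add: has_field_derivative_def)
    moreover have "((\<lambda>h. f (x + h *\<^sub>R b)) has_real_derivative Dd b f x) (at 0)"
      by (rule K_Dd(2)[OF assms(1,2) b assms(3)])
    ultimately show ?thesis by (rule DERIV_unique)
  qed
  have "L a = fst a * Dd (1,0,0,0) f x + fst (snd a) * Dd (0,1,0,0) f x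
             + fst (snd (snd a)) * Dd (0,0,1,0) f x + snd (snd (snd a)) * Dd (0,0,0,1) f x" for a :: R4
  proof -
    obtain a1 a2 a3 a4 where a: "a = (a1, a2, a3, a4)" by (cases a) auto
    have e: "a = a1 *\<^sub>R (1,0,0,0) + a2 *\<^sub>R (0,1,0,0) + a3 *\<^sub>R (0,0,1,0) + a4 *\<^sub>R (0,0,0,1)" by (simp add: a)
    have "L a = L (a1 *\<^sub>R (1,0,0,0) + a2 *\<^sub>R (0,1,0,0) + a3 *\<^sub>R (0,0,1,0) + a4 *\<^sub>R (0,0,0,1))"
      by (rule arg_cong[OF e])
    also have "\<dots> = a1 * L (1,0,0,0) + a2 * L (0,1,0,0) + a3 * L (0,0,1,0) + a4 * L (0,0,0,1)"
      by (simp only: linear_add[OF lin] linear_scale[OF lin] real_scaleR_def)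
    finally have "L a = a1 * L (1,0,0,0) + a2 * L (0,1,0,0) + a3 * L (0,0,1,0) + a4 * L (0,0,0,1)" .
    then show ?thesis using Lb by (simp add: a Basis_R4)
  qed
  then have "L = (\<lambda>a. fst a * Dd (1,0,0,0) f x + fst (snd a) * Dd (0,1,0,0) f x
             + fst (snd (snd a)) * Dd (0,0,1,0) f x + snd (snd (snd a)) * Dd (0,0,0,1) f x)" by auto
  then show ?thesis using L by simp
qed

end


lemma line_deriv:
  fixes f :: "'a::real_normed_vector \<Rightarrow> real"
  assumes "((\<lambda>h. f (z + h0 *\<^sub>R b + h *\<^sub>R b)) has_real_derivative D) (at 0)"
  shows "((\<lambda>h. f (z + h *\<^sub>R b)) has_real_derivative D) (at h0)"
proof -
  have "(\<lambda>h. f (z + (h + h0) *\<^sub>R b)) = (\<lambda>h. f (z + h0 *\<^sub>R b + h *\<^sub>R b))"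
    by (simp add: scaleR_add_left algebra_simps)
  then have "((\<lambda>h. f (z + (h + h0) *\<^sub>R b)) has_real_derivative D) (at 0)" using assms by simp
  then show ?thesis using DERIV_shift[of "\<lambda>h. f (z + h *\<^sub>R b)" D 0 h0] by simp
qed

context sar
begin

lemma K_schwarz:
  assumes f: "K S f" and S: "open S" and x: "x \<in> S" and b: "b \<in> Basis" and c: "c \<in> Basis"
  shows "Dd c (Dd b f) x = Dd b (Dd c f) x"
proof (rule ccontr)
  define fb where "fb = Dd b f"
  define fc where "fc = Dd c f"
  define fbc where "fbc = Dd c fb"
  define fcb where "fcb = Dd b fc"
  have Kfb: "K S fb" unfolding fb_def by (rule K_Dd(1)[OF f S b])
  have Kfc: "K S fc" unfolding fc_def by (rule K_Dd(1)[OF f S c])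
  have Kfbc: "K S fbc" unfolding fbc_def by (rule K_Dd(1)[OF Kfb S c])
  have Kfcb: "K S fcb" unfolding fcb_def by (rule K_Dd(1)[OF Kfc S b])
  have Db: "\<And>y. y \<in> S \<Longrightarrow> ((\<lambda>h. f (y + h *\<^sub>R b)) has_real_derivative fb y) (at 0)"
    unfolding fb_def by (rule K_Dd(2)[OF f S b])
  have Dc: "\<And>y. y \<in> S \<Longrightarrow> ((\<lambda>h. f (y + h *\<^sub>R c)) has_real_derivative fc y) (at 0)"
    unfolding fc_def by (rule K_Dd(2)[OF f S c])
  have Dbc: "\<And>y. y \<in> S \<Longrightarrow> ((\<lambda>h. fb (y + h *\<^sub>R c)) has_real_derivative fbc y) (at 0)"
    unfolding fbc_def by (rule K_Dd(2)[OF Kfb S c])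
  have Dcb: "\<And>y. y \<in> S \<Longrightarrow> ((\<lambda>h. fc (y + h *\<^sub>R b)) has_real_derivative fcb y) (at 0)"
    unfolding fcb_def by (rule K_Dd(2)[OF Kfc S b])
  assume ne: "Dd c (Dd b f) x \<noteq> Dd b (Dd c f) x"
  then have ne': "fbc x \<noteq> fcb x" by (simp add: fbc_def fcb_def fb_def fc_def)
  define \<epsilon> where "\<epsilon> = \<bar>fbc x - fcb x\<bar> / 2"
  have \<epsilon>: "\<epsilon> > 0" using ne' by (simp add: \<epsilon>_def)
  obtain r where r: "r > 0" "ball x r \<subseteq> S" using S x open_contains_ball by blast
  obtain d1 where d1: "d1 > 0" "\<And>y. y \<in> S \<Longrightarrow> dist y x < d1 \<Longrightarrow> dist (fbc y) (fbc x) < \<epsilon>"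
    using K_cont[OF Kfbc S] x \<epsilon> unfolding continuous_on_iff by blast
  obtain d2 where d2: "d2 > 0" "\<And>y. y \<in> S \<Longrightarrow> dist y x < d2 \<Longrightarrow> dist (fcb y) (fcb x) < \<epsilon>"
    using K_cont[OF Kfcb S] x \<epsilon> unfolding continuous_on_iff by blast
  define t where "t = min r (min d1 d2) / 3"
  have t: "t > 0" using r d1 d2 by (simp add: t_def)
  have nb: "norm b = 1" "norm c = 1" using b c by (simp_all add: norm_Basis)
  have P: "x + h *\<^sub>R b + k *\<^sub>R c \<in> S \<and> dist (x + h *\<^sub>R b + k *\<^sub>R c) x < d1 \<and> dist (x + h *\<^sub>R b + k *\<^sub>R c) x < d2"
    if "0 \<le> h" "h \<le> t" "0 \<le> k" "k \<le> t" for h k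
  proof -
    have "dist (x + h *\<^sub>R b + k *\<^sub>R c) x = norm (h *\<^sub>R b + k *\<^sub>R c)" by (simp add: dist_norm)
    also have "\<dots> \<le> norm (h *\<^sub>R b) + norm (k *\<^sub>R c)" by (rule norm_triangle_ineq)
    also have "\<dots> = h + k" using that nb by simp
    finally have "dist (x + h *\<^sub>R b + k *\<^sub>R c) x \<le> h + k" .
    moreover have "h + k < min r (min d1 d2)" using that t unfolding t_def by linarith
    ultimately have "dist (x + h *\<^sub>R b + k *\<^sub>R c) x < min r (min d1 d2)" by linarith
    then have "dist x (x + h *\<^sub>R b + k *\<^sub>R c) < r" "dist (x + h *\<^sub>R b + k *\<^sub>R c) x < d1"
        "dist (x + h *\<^sub>R b + k *\<^sub>R c) x < d2" by (simp_all add: dist_commute)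
    moreover from this(1) have "x + h *\<^sub>R b + k *\<^sub>R c \<in> S" using r(2) by (auto simp only: mem_ball)
    ultimately show ?thesis by blast
  qed
  have P0: "x + h *\<^sub>R b \<in> S" if "0 \<le> h" "h \<le> t" for h using P[of h 0] that t by simp
  have P0': "x + k *\<^sub>R c \<in> S" if "0 \<le> k" "k \<le> t" for k using P[of 0 k] that t by simp
  have "\<exists>\<xi>>0. \<xi> < t \<and> (\<lambda>h. f (x + t *\<^sub>R c + h *\<^sub>R b) - f (x + h *\<^sub>R b)) t - (\<lambda>h. f (x + t *\<^sub>R c + h *\<^sub>R b) - f (x + h *\<^sub>R b)) 0
      = (t - 0) * (fb (x + t *\<^sub>R c + \<xi> *\<^sub>R b) - fb (x + \<xi> *\<^sub>R b))"
  proof (rule MVT2[OF t])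
    fix h assume h: "0 \<le> h" "h \<le> t"
    have m1: "x + t *\<^sub>R c + h *\<^sub>R b \<in> S" using P[of h t] h t by (simp add: algebra_simps)
    have "((\<lambda>k. f (x + t *\<^sub>R c + k *\<^sub>R b)) has_real_derivative fb (x + t *\<^sub>R c + h *\<^sub>R b)) (at h)"
      by (rule line_deriv) (rule Db[OF m1])
    moreover have "((\<lambda>k. f (x + k *\<^sub>R b)) has_real_derivative fb (x + h *\<^sub>R b)) (at h)"
      by (rule line_deriv) (rule Db[OF P0[OF h]])
    ultimately show "((\<lambda>h. f (x + t *\<^sub>R c + h *\<^sub>R b) - f (x + h *\<^sub>R b)) has_real_derivative
        fb (x + t *\<^sub>R c + h *\<^sub>R b) - fb (x + h *\<^sub>R b)) (at h)" by (rule DERIV_diff)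
  qed
  then obtain \<xi> where \<xi>: "0 < \<xi>" "\<xi> < t"
    "f (x + t *\<^sub>R c + t *\<^sub>R b) - f (x + t *\<^sub>R b) - (f (x + t *\<^sub>R c) - f x)
      = t * (fb (x + t *\<^sub>R c + \<xi> *\<^sub>R b) - fb (x + \<xi> *\<^sub>R b))" by auto
  have "\<exists>\<eta>>0. \<eta> < t \<and> (\<lambda>k. fb (x + \<xi> *\<^sub>R b + k *\<^sub>R c)) t - (\<lambda>k. fb (x + \<xi> *\<^sub>R b + k *\<^sub>R c)) 0
      = (t - 0) * fbc (x + \<xi> *\<^sub>R b + \<eta> *\<^sub>R c)"
  proof (rule MVT2[OF t])
    fix k assume k: "0 \<le> k" "k \<le> t"
    have m1: "x + \<xi> *\<^sub>R b + k *\<^sub>R c \<in> S" using P[of \<xi> k] k \<xi> by simp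
    show "((\<lambda>k. fb (x + \<xi> *\<^sub>R b + k *\<^sub>R c)) has_real_derivative fbc (x + \<xi> *\<^sub>R b + k *\<^sub>R c)) (at k)"
      by (rule line_deriv) (rule Dbc[OF m1])
  qed
  then obtain \<eta> where \<eta>: "0 < \<eta>" "\<eta> < t"
    "fb (x + \<xi> *\<^sub>R b + t *\<^sub>R c) - fb (x + \<xi> *\<^sub>R b) = t * fbc (x + \<xi> *\<^sub>R b + \<eta> *\<^sub>R c)" by auto
  have "\<exists>\<xi>>0. \<xi> < t \<and> (\<lambda>k. f (x + t *\<^sub>R b + k *\<^sub>R c) - f (x + k *\<^sub>R c)) t - (\<lambda>k. f (x + t *\<^sub>R b + k *\<^sub>R c) - f (x + k *\<^sub>R c)) 0
      = (t - 0) * (fc (x + t *\<^sub>R b + \<xi> *\<^sub>R c) - fc (x + \<xi> *\<^sub>R c))"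
  proof (rule MVT2[OF t])
    fix k assume k: "0 \<le> k" "k \<le> t"
    have m1: "x + t *\<^sub>R b + k *\<^sub>R c \<in> S" using P[of t k] k t by simp
    have "((\<lambda>h. f (x + t *\<^sub>R b + h *\<^sub>R c)) has_real_derivative fc (x + t *\<^sub>R b + k *\<^sub>R c)) (at k)"
      by (rule line_deriv) (rule Dc[OF m1])
    moreover have "((\<lambda>h. f (x + h *\<^sub>R c)) has_real_derivative fc (x + k *\<^sub>R c)) (at k)"
      by (rule line_deriv) (rule Dc[OF P0'[OF k]])
    ultimately show "((\<lambda>k. f (x + t *\<^sub>R b + k *\<^sub>R c) - f (x + k *\<^sub>R c)) has_real_derivative
        fc (x + t *\<^sub>R b + k *\<^sub>R c) - fc (x + k *\<^sub>R c)) (at k)" by (rule DERIV_diff)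
  qed
  then obtain \<xi>' where \<xi>': "0 < \<xi>'" "\<xi>' < t"
    "f (x + t *\<^sub>R b + t *\<^sub>R c) - f (x + t *\<^sub>R c) - (f (x + t *\<^sub>R b) - f x)
      = t * (fc (x + t *\<^sub>R b + \<xi>' *\<^sub>R c) - fc (x + \<xi>' *\<^sub>R c))" by auto
  have "\<exists>\<eta>>0. \<eta> < t \<and> (\<lambda>h. fc (x + \<xi>' *\<^sub>R c + h *\<^sub>R b)) t - (\<lambda>h. fc (x + \<xi>' *\<^sub>R c + h *\<^sub>R b)) 0
      = (t - 0) * fcb (x + \<xi>' *\<^sub>R c + \<eta> *\<^sub>R b)"
  proof (rule MVT2[OF t])
    fix h assume h: "0 \<le> h" "h \<le> t"
    have m1: "x + \<xi>' *\<^sub>R c + h *\<^sub>R b \<in> S" using P[of h \<xi>'] h \<xi>' by (simp add: algebra_simps)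
    show "((\<lambda>h. fc (x + \<xi>' *\<^sub>R c + h *\<^sub>R b)) has_real_derivative fcb (x + \<xi>' *\<^sub>R c + h *\<^sub>R b)) (at h)"
      by (rule line_deriv) (rule Dcb[OF m1])
  qed
  then obtain \<eta>' where \<eta>': "0 < \<eta>'" "\<eta>' < t"
    "fc (x + \<xi>' *\<^sub>R c + t *\<^sub>R b) - fc (x + \<xi>' *\<^sub>R c) = t * fcb (x + \<xi>' *\<^sub>R c + \<eta>' *\<^sub>R b)" by auto
  have e1: "x + t *\<^sub>R c + t *\<^sub>R b = x + t *\<^sub>R b + t *\<^sub>R c" "x + t *\<^sub>R c + \<xi> *\<^sub>R b = x + \<xi> *\<^sub>R b + t *\<^sub>R c"
     "x + t *\<^sub>R b + \<xi>' *\<^sub>R c = x + \<xi>' *\<^sub>R c + t *\<^sub>R b" by (simp_all add: algebra_simps)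
  have "t * (t * fbc (x + \<xi> *\<^sub>R b + \<eta> *\<^sub>R c)) = t * (t * fcb (x + \<xi>' *\<^sub>R c + \<eta>' *\<^sub>R b))"
    using \<xi>(3) \<eta>(3) \<xi>'(3) \<eta>'(3) e1 by (simp add: algebra_simps)
  then have eq: "fbc (x + \<xi> *\<^sub>R b + \<eta> *\<^sub>R c) = fcb (x + \<xi>' *\<^sub>R c + \<eta>' *\<^sub>R b)" using t by simp
  have q1: "dist (fbc (x + \<xi> *\<^sub>R b + \<eta> *\<^sub>R c)) (fbc x) < \<epsilon>"
    using P[of \<xi> \<eta>] \<xi> \<eta> d1 by auto
  have q2: "dist (fcb (x + \<xi>' *\<^sub>R c + \<eta>' *\<^sub>R b)) (fcb x) < \<epsilon>"
  proof -
    have "x + \<xi>' *\<^sub>R c + \<eta>' *\<^sub>R b = x + \<eta>' *\<^sub>R b + \<xi>' *\<^sub>R c" by (simp add: algebra_simps)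
    moreover have "x + \<eta>' *\<^sub>R b + \<xi>' *\<^sub>R c \<in> S" "dist (x + \<eta>' *\<^sub>R b + \<xi>' *\<^sub>R c) x < d2"
      using P[of \<eta>' \<xi>'] \<xi>' \<eta>' by auto
    ultimately show ?thesis using d2(2) by metis
  qed
  from eq q1 q2 have "\<bar>fbc x - fcb x\<bar> < 2 * \<epsilon>" by (simp add: dist_real_def)
  then show False by (simp add: \<epsilon>_def)
qed

end




lemma norm_line_deriv:
  fixes F :: "real \<Rightarrow> 'a::real_inner"
  assumes "(F has_vector_derivative F') (at 0)" "F 0 \<noteq> 0"
  shows "((\<lambda>h. norm (F h)) has_real_derivative (F' \<bullet> sgn (F 0))) (at 0)"
proof -
  have "(F has_derivative (\<lambda>h. h *\<^sub>R F')) (at 0)" using assms(1) by (simp add: has_vector_derivative_def)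
  moreover have "(norm has_derivative (\<lambda>w. w \<bullet> sgn (F 0))) (at (F 0))" by (rule has_derivative_norm[OF assms(2)])
  ultimately have "((\<lambda>h. norm (F h)) has_derivative (\<lambda>h. (h *\<^sub>R F') \<bullet> sgn (F 0))) (at 0)"
    by (rule has_derivative_compose)
  moreover have "(\<lambda>h. (h *\<^sub>R F') \<bullet> sgn (F 0)) = (*) (F' \<bullet> sgn (F 0))" by (auto simp: fun_eq_iff)
  ultimately show ?thesis by (simp add: has_field_derivative_def)
qed

context sar
begin

definition rho :: "R4 \<Rightarrow> real" where "rho x = 2 / c0 * norm (\<psi> (uv x) - \<gamma> (fst x))"
definition tau :: "R4 \<Rightarrow> real" where "tau x = snd (snd (snd x))"

lemma R_nz: "x \<in> A0 \<Longrightarrow> \<psi> (uv x) - \<gamma> (fst x) \<noteq> 0"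
proof
  assume x: "x \<in> A0" and z: "\<psi> (uv x) - \<gamma> (fst x) = 0"
  obtain \<delta> where d: "\<delta> > 0" "\<forall>x\<in>D. \<forall>s\<in>{s1<..<s2}. \<delta> \<le> dist (\<psi> x) (\<gamma> s)" using dist_pos by blast
  have "\<delta> \<le> dist (\<psi> (uv x)) (\<gamma> (fst x))" using d x by (auto simp: A0_def)
  then show False using z d by (simp add: dist_norm)
qed

lemma K_rho: "K A0 rho"
proof -
  have ps: "K A0 (\<lambda>x. \<psi> (uv x) \<bullet> e)" if "e \<in> Basis" for e
  proof -
    have "K A0 (\<lambda>x. iter_dderiv [] (\<lambda>y. \<psi> y \<bullet> e) (uv x))" by (rule KK.Kpsi) (use that in auto)
    then show ?thesis by simp
  qed
  have gs: "K A0 (\<lambda>x. \<gamma> (fst x) \<bullet> e)" if "e \<in> Basis" for e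
  proof -
    have "K A0 (\<lambda>x. iter_dderiv [] (\<lambda>y. \<gamma> y \<bullet> e) (fst x))" by (rule KK.Kgam) (use that in auto)
    then show ?thesis by simp
  qed
  define Q where "Q = (\<lambda>x. \<Sum>e\<in>Basis. (\<psi> (uv x) \<bullet> e + (-1) * (\<gamma> (fst x) \<bullet> e)) * (\<psi> (uv x) \<bullet> e + (-1) * (\<gamma> (fst x) \<bullet> e)))"
  have KQ: "K A0 Q" unfolding Q_def
    by (intro K_sum finite_Basis KK.Kmult KK.Kadd KK.Kconst ps gs)
  have Qn: "Q x = (norm (\<psi> (uv x) - \<gamma> (fst x)))\<^sup>2" for x
  proof -
    have "(norm (\<psi> (uv x) - \<gamma> (fst x)))\<^sup>2 = (\<psi> (uv x) - \<gamma> (fst x)) \<bullet> (\<psi> (uv x) - \<gamma> (fst x))"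
      by (simp add: power2_norm_eq_inner)
    also have "\<dots> = (\<Sum>e\<in>Basis. ((\<psi> (uv x) - \<gamma> (fst x)) \<bullet> e) * ((\<psi> (uv x) - \<gamma> (fst x)) \<bullet> e))"
      by (rule euclidean_inner)
    finally show ?thesis by (simp add: Q_def inner_diff_left)
  qed
  have pos: "\<forall>x\<in>A0. Q x > 0" using R_nz by (simp add: Qn)
  have "K A0 (\<lambda>x. (2 / c0) * sqrt (Q x))"
    by (intro KK.Kmult KK.Kconst KK.Ksqrt KQ pos)
  moreover have "\<forall>x\<in>A0. rho x = (2 / c0) * sqrt (Q x)" by (simp add: Qn rho_def)
  ultimately show ?thesis by (rule KK.Kcong)
qed


lemma gamma_vd: "s \<in> {s1<..<s2} \<Longrightarrow> (\<gamma> has_vector_derivative gdot \<gamma> s) (at s)"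
proof -
  assume s: "s \<in> {s1<..<s2}"
  have "(\<lambda>t. \<gamma> t \<bullet> i) differentiable (at s)" if i: "i \<in> Basis" for i
  proof -
    have "((\<lambda>h. iter_dderiv [] (\<lambda>y. \<gamma> y \<bullet> i) (s + h)) has_real_derivative iter_dderiv [1] (\<lambda>y. \<gamma> y \<bullet> i) s) (at 0)"
      by (rule gam_dd) (use i s in auto)
    then have "((\<lambda>h. \<gamma> (h + s) \<bullet> i) has_real_derivative iter_dderiv [1] (\<lambda>y. \<gamma> y \<bullet> i) s) (at 0)"
      by (simp add: add.commute)
    then have "((\<lambda>t. \<gamma> t \<bullet> i) has_real_derivative iter_dderiv [1] (\<lambda>y. \<gamma> y \<bullet> i) s) (at (0 + s))"
      using DERIV_shift by blast
    then show ?thesis unfolding has_field_derivative_def by (auto intro: differentiableI)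
  qed
  then have "\<gamma> differentiable (at s)" using differentiable_componentwise_within[of \<gamma> s UNIV] by blast
  then show ?thesis unfolding gdot_def using vector_derivative_works by blast
qed

lemma psi_diff: "p \<in> D \<Longrightarrow> \<psi> differentiable (at p)"
  using psi_imm differentiableI by blast

lemma psi_vd_u: "(u, v) \<in> D \<Longrightarrow> ((\<lambda>h. \<psi> (u + h, v)) has_vector_derivative psi_u \<psi> u v) (at 0)"
proof -
  assume uv: "(u, v) \<in> D"
  have "((\<lambda>h. (u + h, v)) has_derivative (\<lambda>h. (h, 0))) (at 0)"
    by (intro has_derivative_Pair has_derivative_const) (auto intro!: derivative_eq_intros)
  then have "(\<lambda>h. (u + h, v)) differentiable (at 0)" by (rule differentiableI)
  moreover have "\<psi> differentiable (at ((\<lambda>h. (u + h, v)) 0))" using psi_diff uv by simp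
  ultimately have "(\<lambda>h. \<psi> (u + h, v)) differentiable (at 0)"
    using differentiable_compose[of \<psi> "\<lambda>h. (u + h, v)" 0 UNIV] by simp
  then show ?thesis unfolding psi_u_def using vector_derivative_works by blast
qed

lemma psi_vd_v: "(u, v) \<in> D \<Longrightarrow> ((\<lambda>h. \<psi> (u, v + h)) has_vector_derivative psi_v \<psi> u v) (at 0)"
proof -
  assume uv: "(u, v) \<in> D"
  have "((\<lambda>h. (u, v + h)) has_derivative (\<lambda>h. (0, h))) (at 0)"
    by (intro has_derivative_Pair has_derivative_const) (auto intro!: derivative_eq_intros)
  then have "(\<lambda>h. (u, v + h)) differentiable (at 0)" by (rule differentiableI)
  moreover have "\<psi> differentiable (at ((\<lambda>h. (u, v + h)) 0))" using psi_diff uv by simp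
  ultimately have "(\<lambda>h. \<psi> (u, v + h)) differentiable (at 0)"
    using differentiable_compose[of \<psi> "\<lambda>h. (u, v + h)" 0 UNIV] by simp
  then show ?thesis unfolding psi_v_def using vector_derivative_works by blast
qed

lemma sgn_Rv: "sgn (Rv \<psi> \<gamma> u v s) = Rhat \<psi> \<gamma> u v s"
  by (simp add: Rhat_def sgn_div_norm inverse_eq_divide)

lemma piT_fst: "fst (piT \<psi> \<gamma> u v s) = Rhat \<psi> \<gamma> u v s \<bullet> psi_u \<psi> u v"
proof -
  have "cross3 (psi_u \<psi> u v) (psi_v \<psi> u v) \<bullet> psi_u \<psi> u v = 0"
    using dot_cross_self(1)[of "psi_u \<psi> u v" "psi_v \<psi> u v"] by (simp add: inner_commute)
  then show ?thesis by (simp add: piT_def Let_def unit_normal_def inner_diff_left)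
qed

lemma piT_snd: "snd (piT \<psi> \<gamma> u v s) = Rhat \<psi> \<gamma> u v s \<bullet> psi_v \<psi> u v"
proof -
  have "cross3 (psi_u \<psi> u v) (psi_v \<psi> u v) \<bullet> psi_v \<psi> u v = 0"
    using dot_cross_self(3)[of "psi_u \<psi> u v" "psi_v \<psi> u v"] by simp
  then show ?thesis by (simp add: piT_def Let_def unit_normal_def inner_diff_left)
qed

lemma rho_d1:
  assumes x: "x = (s, u, v, t)" "x \<in> A0"
  shows "((\<lambda>h. rho (x + h *\<^sub>R (1,0,0,0))) has_real_derivative - (2 / c0) * (Rhat \<psi> \<gamma> u v s \<bullet> gdot \<gamma> s)) (at 0)"
proof -
  have s: "s \<in> {s1<..<s2}" and uvD: "(u, v) \<in> D" using x by (auto simp: A0_def uv_def)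
  have nz: "\<psi> (u, v) - \<gamma> s \<noteq> 0" using R_nz[OF x(2)] x(1) by (simp add: uv_def)
  have "((\<lambda>h. s + h) has_vector_derivative 1) (at 0)"
    unfolding has_vector_derivative_def by (auto intro!: derivative_eq_intros)
  moreover have "(\<gamma> has_vector_derivative gdot \<gamma> s) (at ((\<lambda>h. s + h) 0))" using gamma_vd[OF s] by simp
  ultimately have "((\<gamma> \<circ> (\<lambda>h. s + h)) has_vector_derivative (1 *\<^sub>R gdot \<gamma> s)) (at 0)"
    by (rule vector_diff_chain_at)
  then have "((\<lambda>h. \<gamma> (s + h)) has_vector_derivative gdot \<gamma> s) (at 0)" by (simp add: o_def)
  then have "((\<lambda>h. \<psi> (u, v) - \<gamma> (s + h)) has_vector_derivative 0 - gdot \<gamma> s) (at 0)"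
    by (intro has_vector_derivative_diff has_vector_derivative_const)
  from norm_line_deriv[OF this] nz
  have "((\<lambda>h. norm (\<psi> (u, v) - \<gamma> (s + h))) has_real_derivative (0 - gdot \<gamma> s) \<bullet> sgn (\<psi> (u, v) - \<gamma> s)) (at 0)"
    by simp
  then have "((\<lambda>h. 2 / c0 * norm (\<psi> (u, v) - \<gamma> (s + h))) has_real_derivative 2 / c0 * ((0 - gdot \<gamma> s) \<bullet> sgn (\<psi> (u, v) - \<gamma> s))) (at 0)"
    by (rule DERIV_cmult)
  moreover have "sgn (\<psi> (u, v) - \<gamma> s) = Rhat \<psi> \<gamma> u v s" using sgn_Rv by (simp add: Rv_def)
  ultimately show ?thesis using x(1) by (simp add: rho_def uv_def inner_commute)
qed

lemma rho_d2:
  assumes x: "x = (s, u, v, t)" "x \<in> A0"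
  shows "((\<lambda>h. rho (x + h *\<^sub>R (0,1,0,0))) has_real_derivative (2 / c0) * (Rhat \<psi> \<gamma> u v s \<bullet> psi_u \<psi> u v)) (at 0)"
proof -
  have s: "s \<in> {s1<..<s2}" and uvD: "(u, v) \<in> D" using x by (auto simp: A0_def uv_def)
  have nz: "\<psi> (u, v) - \<gamma> s \<noteq> 0" using R_nz[OF x(2)] x(1) by (simp add: uv_def)
  have "((\<lambda>h. \<psi> (u + h, v) - \<gamma> s) has_vector_derivative psi_u \<psi> u v - 0) (at 0)"
    by (intro has_vector_derivative_diff has_vector_derivative_const psi_vd_u uvD)
  from norm_line_deriv[OF this] nz
  have "((\<lambda>h. norm (\<psi> (u + h, v) - \<gamma> s)) has_real_derivative (psi_u \<psi> u v - 0) \<bullet> sgn (\<psi> (u, v) - \<gamma> s)) (at 0)"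
    by simp
  then have "((\<lambda>h. 2 / c0 * norm (\<psi> (u + h, v) - \<gamma> s)) has_real_derivative 2 / c0 * ((psi_u \<psi> u v - 0) \<bullet> sgn (\<psi> (u, v) - \<gamma> s))) (at 0)"
    by (rule DERIV_cmult)
  moreover have "sgn (\<psi> (u, v) - \<gamma> s) = Rhat \<psi> \<gamma> u v s" using sgn_Rv by (simp add: Rv_def)
  ultimately show ?thesis using x(1) by (simp add: rho_def uv_def inner_commute)
qed

lemma rho_d3:
  assumes x: "x = (s, u, v, t)" "x \<in> A0"
  shows "((\<lambda>h. rho (x + h *\<^sub>R (0,0,1,0))) has_real_derivative (2 / c0) * (Rhat \<psi> \<gamma> u v s \<bullet> psi_v \<psi> u v)) (at 0)"
proof -
  have s: "s \<in> {s1<..<s2}" and uvD: "(u, v) \<in> D" using x by (auto simp: A0_def uv_def)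
  have nz: "\<psi> (u, v) - \<gamma> s \<noteq> 0" using R_nz[OF x(2)] x(1) by (simp add: uv_def)
  have "((\<lambda>h. \<psi> (u, v + h) - \<gamma> s) has_vector_derivative psi_v \<psi> u v - 0) (at 0)"
    by (intro has_vector_derivative_diff has_vector_derivative_const psi_vd_v uvD)
  from norm_line_deriv[OF this] nz
  have "((\<lambda>h. norm (\<psi> (u, v + h) - \<gamma> s)) has_real_derivative (psi_v \<psi> u v - 0) \<bullet> sgn (\<psi> (u, v) - \<gamma> s)) (at 0)"
    by simp
  then have "((\<lambda>h. 2 / c0 * norm (\<psi> (u, v + h) - \<gamma> s)) has_real_derivative 2 / c0 * ((psi_v \<psi> u v - 0) \<bullet> sgn (\<psi> (u, v) - \<gamma> s))) (at 0)"
    by (rule DERIV_cmult)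
  moreover have "sgn (\<psi> (u, v) - \<gamma> s) = Rhat \<psi> \<gamma> u v s" using sgn_Rv by (simp add: Rv_def)
  ultimately show ?thesis using x(1) by (simp add: rho_def uv_def inner_commute)
qed


definition rs :: "R4 \<Rightarrow> real" where "rs = Dd (1,0,0,0) rho"
definition ru :: "R4 \<Rightarrow> real" where "ru = Dd (0,1,0,0) rho"
definition rv :: "R4 \<Rightarrow> real" where "rv = Dd (0,0,1,0) rho"

lemma rs_eq: "x = (s, u, v, t) \<Longrightarrow> x \<in> A0 \<Longrightarrow> rs x = - (2 / c0) * (Rhat \<psi> \<gamma> u v s \<bullet> gdot \<gamma> s)"
  unfolding rs_def Dd_def by (rule DERIV_imp_deriv[OF rho_d1])

lemma ru_eq: "x = (s, u, v, t) \<Longrightarrow> x \<in> A0 \<Longrightarrow> ru x = (2 / c0) * fst (piT \<psi> \<gamma> u v s)"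
  unfolding ru_def Dd_def piT_fst by (rule DERIV_imp_deriv[OF rho_d2])

lemma rv_eq: "x = (s, u, v, t) \<Longrightarrow> x \<in> A0 \<Longrightarrow> rv x = (2 / c0) * snd (piT \<psi> \<gamma> u v s)"
  unfolding rv_def Dd_def piT_snd by (rule DERIV_imp_deriv[OF rho_d3])

lemma B4: "(1,0,0,0) \<in> (Basis :: R4 set)" "(0,1,0,0) \<in> (Basis :: R4 set)" "(0,0,1,0) \<in> (Basis :: R4 set)" "(0,0,0,1) \<in> (Basis :: R4 set)"
  by (simp_all add: Basis_R4)

lemma K_rs: "K A0 rs" unfolding rs_def by (rule K_Dd(1)[OF K_rho open_A0 B4(1)])
lemma K_ru: "K A0 ru" unfolding ru_def by (rule K_Dd(1)[OF K_rho open_A0 B4(2)])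
lemma K_rv: "K A0 rv" unfolding rv_def by (rule K_Dd(1)[OF K_rho open_A0 B4(3)])

definition phi :: "R4 \<Rightarrow> pt" where
  "phi x = ((fst x, rho x, - (tau x * rs x), tau x), (fst (snd x), fst (snd (snd x)), tau x * ru x, tau x * rv x))"

definition U :: "R4 set" where "U = {x \<in> A0. tau x \<noteq> 0 \<and> rho x \<in> {t1<..<t2}}"

definition proj :: "pt \<Rightarrow> R4" where
  "proj y = (fst (fst y), fst (snd y), fst (snd (snd y)), snd (snd (snd (fst y))))"

definition Cs :: "pt set" where
  "Cs = Lambda' \<psi> \<gamma> c0 s1 s2 t1 t2 D \<inter> cotangent_nonzero (Yset s1 s2 t1 t2) (Xset \<psi> \<gamma> c0 s1 s2 t1 t2 D)"

lemma Cs_iff: "y \<in> Cs \<longleftrightarrow> proj y \<in> U \<and> y = phi (proj y)"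
proof -
  obtain s t \<sigma> \<tau> u v \<xi> \<eta> where y: "y = ((s, t, \<sigma>, \<tau>), (u, v, \<xi>, \<eta>))" by (cases y) auto
  let ?x = "(s, u, v, \<tau>)"
  have px: "proj y = ?x" by (simp add: y proj_def)
  have c0': "c0 \<noteq> 0" using c0 by simp
  show ?thesis
  proof
    assume "y \<in> Cs"
    then have m: "s \<in> {s1<..<s2}" "t \<in> {t1<..<t2}" "(u, v) \<in> D" "(\<sigma>, \<tau>, \<xi>, \<eta>) \<noteq> 0"
      "t = 2 / c0 * norm (Rv \<psi> \<gamma> u v s)"
      "\<sigma> = 2 * \<tau> / c0 * (Rhat \<psi> \<gamma> u v s \<bullet> gdot \<gamma> s)"
      "(- \<xi>, - \<eta>) = - (2 * \<tau> / c0) *\<^sub>R piT \<psi> \<gamma> u v s"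
      by (auto simp: Cs_def y Lambda'_def Lambda_def cotangent_nonzero_def Yset_def Xset_def)
    have A: "?x \<in> A0" using m by (simp add: A0_def uv_def)
    have r: "rho ?x = t" using m by (simp add: rho_def uv_def Rv_def)
    have e1: "\<sigma> = - (\<tau> * rs ?x)" unfolding m(6) rs_eq[OF refl A] using c0' by (simp add: field_simps)
    have p: "\<xi> = 2 * \<tau> / c0 * fst (piT \<psi> \<gamma> u v s)" "\<eta> = 2 * \<tau> / c0 * snd (piT \<psi> \<gamma> u v s)"
      using m(7) by (simp_all add: prod_eq_iff)
    have e2: "\<xi> = \<tau> * ru ?x" "\<eta> = \<tau> * rv ?x" unfolding p ru_eq[OF refl A] rv_eq[OF refl A]
      using c0' by (simp_all add: field_simps)
    have "\<tau> \<noteq> 0"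
    proof
      assume "\<tau> = 0"
      then show False using m(4) e1 e2 by (simp add: zero_prod_def)
    qed
    then have "?x \<in> U" using A r m by (simp add: U_def tau_def)
    moreover have "y = phi ?x" using r e1 e2 by (simp add: y phi_def tau_def)
    ultimately show "proj y \<in> U \<and> y = phi (proj y)" using px by simp
  next
    assume a: "proj y \<in> U \<and> y = phi (proj y)"
    then have U: "?x \<in> U" and yy: "y = phi ?x" using px by auto
    have A: "?x \<in> A0" and tn: "\<tau> \<noteq> 0" and tr: "rho ?x \<in> {t1<..<t2}" using U by (auto simp: U_def tau_def)
    have m: "s \<in> {s1<..<s2}" "(u, v) \<in> D" using A by (auto simp: A0_def uv_def)
    have eqs: "t = rho ?x" "\<sigma> = - (\<tau> * rs ?x)" "\<xi> = \<tau> * ru ?x" "\<eta> = \<tau> * rv ?x"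
      using yy by (simp_all add: y phi_def tau_def)
    have r: "rho ?x = 2 / c0 * norm (Rv \<psi> \<gamma> u v s)" by (simp add: rho_def uv_def Rv_def)
    have X: "(u, v) \<in> Xset \<psi> \<gamma> c0 s1 s2 t1 t2 D"
      using m tr r unfolding Xset_def by (auto simp: Rv_def)
    have L1: "\<sigma> = 2 * \<tau> / c0 * (Rhat \<psi> \<gamma> u v s \<bullet> gdot \<gamma> s)"
      unfolding eqs(2) rs_eq[OF refl A] using c0' by (simp add: field_simps)
    have L2: "(- \<xi>, - \<eta>) = - (2 * \<tau> / c0) *\<^sub>R piT \<psi> \<gamma> u v s"
      using eqs ru_eq[OF refl A] rv_eq[OF refl A] c0' by (simp add: field_simps prod_eq_iff)
    have nz: "(\<sigma>, \<tau>, \<xi>, \<eta>) \<noteq> 0" using tn by (simp add: zero_prod_def)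
    show "y \<in> Cs"
      using m X L1 L2 nz tr eqs r
      by (simp add: Cs_def y Lambda'_def Lambda_def cotangent_nonzero_def Yset_def)
  qed
qed


lemma Dd_indep:
  fixes f :: "'a::real_normed_vector \<Rightarrow> real"
  assumes "\<And>y h. f (y + h *\<^sub>R e) = f y"
  shows "Dd b f (y + h *\<^sub>R e) = Dd b f y"
proof -
  have "(\<lambda>k. f (y + h *\<^sub>R e + k *\<^sub>R b)) = (\<lambda>k. f (y + k *\<^sub>R b))"
  proof
    fix k
    have "y + h *\<^sub>R e + k *\<^sub>R b = (y + k *\<^sub>R b) + h *\<^sub>R e" by (simp add: algebra_simps)
    then show "f (y + h *\<^sub>R e + k *\<^sub>R b) = f (y + k *\<^sub>R b)" by (metis assms)
  qed
  then show ?thesis by (simp add: Dd_def)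
qed

lemma Dd_indep0:
  fixes f :: "'a::real_normed_vector \<Rightarrow> real"
  assumes "\<And>y h. f (y + h *\<^sub>R e) = f y"
  shows "Dd e f y = 0"
  using assms by (simp add: Dd_def)

lemma rho_indep: "rho (y + h *\<^sub>R (0,0,0,1)) = rho y"
  by (simp add: rho_def uv_def)

lemma rs_indep: "rs (y + h *\<^sub>R (0,0,0,1)) = rs y"
  unfolding rs_def by (rule Dd_indep[OF rho_indep])
lemma ru_indep: "ru (y + h *\<^sub>R (0,0,0,1)) = ru y"
  unfolding ru_def by (rule Dd_indep[OF rho_indep])
lemma rv_indep: "rv (y + h *\<^sub>R (0,0,0,1)) = rv y"
  unfolding rv_def by (rule Dd_indep[OF rho_indep])

definition DD :: "(R4 \<Rightarrow> real) \<Rightarrow> R4 \<Rightarrow> R4 \<Rightarrow> real" where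
  "DD f x a = fst a * Dd (1,0,0,0) f x + fst (snd a) * Dd (0,1,0,0) f x + fst (snd (snd a)) * Dd (0,0,1,0) f x"

lemma K_hasderiv_indep:
  assumes "K A0 f" "\<And>y h. f (y + h *\<^sub>R (0,0,0,1)) = f y" "x \<in> A0"
  shows "(f has_derivative DD f x) (at x)"
proof -
  have "Dd (0,0,0,1) f x = 0" by (rule Dd_indep0[OF assms(2)])
  then show ?thesis using K_hasderiv[OF assms(1) open_A0 assms(3)] by (simp add: DD_def[abs_def])
qed

definition Lphi :: "R4 \<Rightarrow> R4 \<Rightarrow> pt" where
  "Lphi x a = ((fst a, DD rho x a, - (tau x * DD rs x a + tau a * rs x), tau a),
               (fst (snd a), fst (snd (snd a)), tau x * DD ru x a + tau a * ru x, tau x * DD rv x a + tau a * rv x))"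

lemma bl_tau: "bounded_linear tau"
  unfolding tau_def
  by (intro bounded_linear_compose[OF bounded_linear_snd bounded_linear_compose[OF bounded_linear_snd bounded_linear_snd]])

lemma bl_u: "bounded_linear (\<lambda>x::R4. fst (snd x))"
  by (intro bounded_linear_compose[OF bounded_linear_fst bounded_linear_snd])

lemma bl_v: "bounded_linear (\<lambda>x::R4. fst (snd (snd x)))"
  by (intro bounded_linear_compose[OF bounded_linear_fst bounded_linear_compose[OF bounded_linear_snd bounded_linear_snd]])

lemma phi_deriv:
  assumes x: "x \<in> A0"
  shows "(phi has_derivative Lphi x) (at x)"
proof -
  have dfst: "((\<lambda>x::R4. fst x) has_derivative (\<lambda>a. fst a)) (at x)"
    by (rule bounded_linear.has_derivative[OF bounded_linear_fst has_derivative_ident])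
  have dtau: "(tau has_derivative tau) (at x)"
    by (rule bounded_linear.has_derivative[OF bl_tau has_derivative_ident])
  have du: "((\<lambda>x::R4. fst (snd x)) has_derivative (\<lambda>a. fst (snd a))) (at x)"
    by (rule bounded_linear.has_derivative[OF bl_u has_derivative_ident])
  have dv: "((\<lambda>x::R4. fst (snd (snd x))) has_derivative (\<lambda>a. fst (snd (snd a)))) (at x)"
    by (rule bounded_linear.has_derivative[OF bl_v has_derivative_ident])
  have drho: "(rho has_derivative DD rho x) (at x)" by (rule K_hasderiv_indep[OF K_rho rho_indep x])
  have drs: "(rs has_derivative DD rs x) (at x)" by (rule K_hasderiv_indep[OF K_rs rs_indep x])
  have dru: "(ru has_derivative DD ru x) (at x)" by (rule K_hasderiv_indep[OF K_ru ru_indep x])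
  have drv: "(rv has_derivative DD rv x) (at x)" by (rule K_hasderiv_indep[OF K_rv rv_indep x])
  have "((\<lambda>x. ((fst x, rho x, - (tau x * rs x), tau x), (fst (snd x), fst (snd (snd x)), tau x * ru x, tau x * rv x)))
     has_derivative (\<lambda>a. ((fst a, DD rho x a, - (tau x * DD rs x a + tau a * rs x), tau a),
               (fst (snd a), fst (snd (snd a)), tau x * DD ru x a + tau a * ru x, tau x * DD rv x a + tau a * rv x)))) (at x)"
    by (intro has_derivative_Pair dfst drho has_derivative_minus has_derivative_mult dtau drs du dv dru drv)
  then show ?thesis by (simp add: phi_def[abs_def] Lphi_def[abs_def])
qed

lemma inj_Lphi: "inj (Lphi x)"
proof (rule injI)
  fix a b assume "Lphi x a = Lphi x b"
  then have "fst a = fst b" "tau a = tau b" "fst (snd a) = fst (snd b)" "fst (snd (snd a)) = fst (snd (snd b))"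
    by (simp_all add: Lphi_def)
  then show "a = b" by (simp add: tau_def prod_eq_iff)
qed

lemma proj_phi: "proj (phi x) = x"
  by (simp add: proj_def phi_def tau_def)

lemma U_sub: "U \<subseteq> A0" by (auto simp: U_def)

lemma phi_U: "phi ` U = Cs"
proof
  show "phi ` U \<subseteq> Cs"
  proof
    fix y assume "y \<in> phi ` U"
    then obtain x where x: "x \<in> U" "y = phi x" by blast
    then show "y \<in> Cs" using Cs_iff[of y] proj_phi[of x] by simp
  qed
  show "Cs \<subseteq> phi ` U" using Cs_iff by (metis image_eqI subsetI)
qed

lemma phi_cont: "continuous_on A0 phi"
proof (rule continuous_at_imp_continuous_on, rule ballI)
  fix x assume "x \<in> A0"
  then show "isCont phi x" using phi_deriv has_derivative_continuous by blast
qed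

lemma rho_cont: "continuous_on A0 rho" by (rule K_cont[OF K_rho open_A0])

lemma open_U: "open U"
proof -
  have "continuous_on A0 (\<lambda>x. (tau x, rho x))"
    by (intro continuous_on_Pair rho_cont linear_continuous_on bl_tau)
  then have "open (A0 \<inter> (\<lambda>x. (tau x, rho x)) -` (Sigma (- {0}) (\<lambda>_. {t1<..<t2})))"
    by (intro continuous_open_preimage open_A0 open_Times) auto
  moreover have "A0 \<inter> (\<lambda>x. (tau x, rho x)) -` (Sigma (- {0}) (\<lambda>_. {t1<..<t2})) = U" by (auto simp: U_def)
  ultimately show ?thesis by simp
qed


lemma K_linc: "K A0 (\<lambda>x. fst x)" "K A0 (\<lambda>x. fst (snd x))" "K A0 (\<lambda>x. fst (snd (snd x)))" "K A0 tau"
proof -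
  have "K A0 (\<lambda>x. x \<bullet> w)" for w by (rule KK.Klin)
  note k = this
  show "K A0 (\<lambda>x. fst x)" by (rule KK.Kcong[OF k[of "(1,0,0,0)"]]) (auto simp: inner_prod_def)
  show "K A0 (\<lambda>x. fst (snd x))" by (rule KK.Kcong[OF k[of "(0,1,0,0)"]]) (auto simp: inner_prod_def)
  show "K A0 (\<lambda>x. fst (snd (snd x)))" by (rule KK.Kcong[OF k[of "(0,0,1,0)"]]) (auto simp: inner_prod_def)
  show "K A0 tau" by (rule KK.Kcong[OF k[of "(0,0,0,1)"]]) (auto simp: inner_prod_def tau_def)
qed

lemma K_neg: "K S f \<Longrightarrow> K S (\<lambda>x. - f x)"
  by (rule KK.Kcong[OF KK.Kmult[OF KK.Kconst[of _ _ _ _ "-1"]]]) auto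

lemma smooth_mono: "smooth_on_set S f \<Longrightarrow> T \<subseteq> S \<Longrightarrow> smooth_on_set T f"
  unfolding smooth_on_set_def by (meson continuous_on_subset subsetD)

lemma phi_smooth: "smooth_on_set U phi"
proof -
  have "smooth_on_set A0 phi"
  proof (rule smooth_from_K[OF _ open_A0])
    fix c :: pt assume "c \<in> Basis"
    then have "c \<in> (\<lambda>u. (u, 0)) ` (Basis :: R4 set) \<union> (\<lambda>v. (0, v)) ` (Basis :: R4 set)"
      by (subst (asm) Basis_prod_def)
    then obtain b :: R4 where b: "b \<in> Basis" "c = (b, 0) \<or> c = (0, b)"
      by blast
    from b(1) have b4: "b = (1,0,0,0) \<or> b = (0,1,0,0) \<or> b = (0,0,1,0) \<or> b = (0,0,0,1)" by (simp add: Basis_R4)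
    from b(2) b4 show "K A0 (\<lambda>x. phi x \<bullet> c)"
      by (elim disjE) (simp_all add: phi_def inner_prod_def K_linc K_rho K_neg KK.Kmult K_rs K_ru K_rv)
  qed
  then show ?thesis using smooth_mono U_sub by blast
qed

lemma proj_cont: "continuous_on S proj"
  unfolding proj_def by (intro continuous_on_Pair continuous_on_fst continuous_on_snd continuous_on_id)

lemma inj_phi: "inj_on phi U"
  by (metis inj_onI proj_phi)

lemma submanifold_Cs: "submanifold4 Cs"
  unfolding submanifold4_def
proof (rule ballI, intro exI[where x=U] exI[where x="UNIV :: pt set"] exI[where x=phi] conjI)
  show "open U" by (rule open_U)
  show "open (UNIV :: pt set)" by simp
  fix p assume "p \<in> Cs"
  show "p \<in> UNIV" by simp
  show "smooth_on_set U phi" by (rule phi_smooth)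
  show "inj_on phi U" by (rule inj_phi)
  show "phi ` U = Cs \<inter> UNIV" using phi_U by simp
  have "\<forall>y\<in>Cs \<inter> UNIV. inv_into U phi y = proj y"
    using Cs_iff inj_phi by (metis IntD1 inv_into_f_f)
  then show "continuous_on (Cs \<inter> UNIV) (inv_into U phi)"
    using proj_cont continuous_on_cong by fastforce
  show "\<forall>x\<in>U. \<exists>L. (phi has_derivative L) (at x) \<and> inj L"
    using phi_deriv inj_Lphi U_sub by blast
qed

abbreviation CN where "CN \<equiv> cotangent_nonzero (Yset s1 s2 t1 t2) (Xset \<psi> \<gamma> c0 s1 s2 t1 t2 D)"

lemma CN_A0: "y \<in> CN \<Longrightarrow> proj y \<in> A0"
proof -
  assume y: "y \<in> CN"
  obtain s t \<sigma> \<tau> u v \<xi> \<eta> where yy: "y = ((s, t, \<sigma>, \<tau>), (u, v, \<xi>, \<eta>))" by (cases y) auto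
  have "(s, t) \<in> Yset s1 s2 t1 t2" "(u, v) \<in> Xset \<psi> \<gamma> c0 s1 s2 t1 t2 D"
    using y unfolding yy cotangent_nonzero_def by auto
  then have "s \<in> {s1<..<s2}" "(u, v) \<in> D" unfolding Yset_def Xset_def by auto
  then show ?thesis by (simp add: yy proj_def A0_def uv_def)
qed

lemma Cs_CN: "Cs = {y \<in> CN. y - phi (proj y) = 0}"
proof
  show "Cs \<subseteq> {y \<in> CN. y - phi (proj y) = 0}"
  proof
    fix y assume y: "y \<in> Cs"
    then have "y \<in> CN" by (simp add: Cs_def)
    moreover have "y = phi (proj y)" using Cs_iff y by blast
    ultimately show "y \<in> {y \<in> CN. y - phi (proj y) = 0}" by simp
  qed
  show "{y \<in> CN. y - phi (proj y) = 0} \<subseteq> Cs"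
  proof
    fix y assume y: "y \<in> {y \<in> CN. y - phi (proj y) = 0}"
    obtain s t \<sigma> \<tau> u v \<xi> \<eta> where yy: "y = ((s, t, \<sigma>, \<tau>), (u, v, \<xi>, \<eta>))" by (cases y) auto
    have e: "y = phi (proj y)" using y by simp
    have A: "proj y \<in> A0" using CN_A0 y by blast
    have m: "t \<in> {t1<..<t2}" "(\<sigma>, \<tau>, \<xi>, \<eta>) \<noteq> 0" using y yy by (auto simp: cotangent_nonzero_def Yset_def)
    have py: "proj y = (s, u, v, \<tau>)" by (simp add: yy proj_def)
    have e2: "t = rho (proj y)" "\<sigma> = - (\<tau> * rs (proj y))" "\<xi> = \<tau> * ru (proj y)" "\<eta> = \<tau> * rv (proj y)"
      using e[unfolded yy] unfolding py by (simp_all add: phi_def tau_def proj_def)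
    have "\<tau> \<noteq> 0" using m(2) e2 by (auto simp: zero_prod_def)
    then have "proj y \<in> U" using A m(1) e2(1) unfolding py by (simp add: U_def tau_def)
    then show "y \<in> Cs" using Cs_iff e by blast
  qed
qed

lemma closed_Cs: "closedin (top_of_set CN) Cs"
proof -
  have "continuous_on CN (\<lambda>y. y - phi (proj y))"
  proof (intro continuous_on_diff continuous_on_id)
    show "continuous_on CN (\<lambda>y. phi (proj y))"
      by (rule continuous_on_compose2[OF phi_cont proj_cont]) (use CN_A0 in blast)
  qed
  then show ?thesis unfolding Cs_CN by (rule continuous_closedin_preimage_constant)
qed

lemma rs_tau: "rs (s, u, v, a) = rs (s, u, v, b)"
  using rs_indep[of "(s, u, v, b)" "a - b"] by simp
lemma ru_tau: "ru (s, u, v, a) = ru (s, u, v, b)"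
  using ru_indep[of "(s, u, v, b)" "a - b"] by simp
lemma rv_tau: "rv (s, u, v, a) = rv (s, u, v, b)"
  using rv_indep[of "(s, u, v, b)" "a - b"] by simp
lemma rho_tau: "rho (s, u, v, a) = rho (s, u, v, b)"
  by (simp add: rho_def uv_def)

lemma conic_Cs: "conic Cs"
  unfolding conic_def
proof (intro ballI allI impI)
  fix p and l :: real assume p: "p \<in> Cs" and l: "l > 0"
  obtain s t \<sigma> \<tau> u v \<xi> \<eta> where pp: "p = ((s, t, \<sigma>, \<tau>), (u, v, \<xi>, \<eta>))" by (cases p) auto
  have U: "(s, u, v, \<tau>) \<in> U" and e: "p = phi (s, u, v, \<tau>)" using Cs_iff p pp by (auto simp: proj_def)
  have U': "(s, u, v, l * \<tau>) \<in> U" using U l by (auto simp: U_def tau_def A0_def uv_def rho_tau[of s u v "l * \<tau>" \<tau>])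
  have "fiber_scale l p = phi (s, u, v, l * \<tau>)"
    using e by (simp add: pp phi_def tau_def rs_tau[of s u v "l * \<tau>" \<tau>] ru_tau[of s u v "l * \<tau>" \<tau>]
        rv_tau[of s u v "l * \<tau>" \<tau>] rho_tau[of s u v "l * \<tau>" \<tau>])
  then show "fiber_scale l p \<in> Cs" using Cs_iff U' proj_phi by metis
qed


lemma bl_proj: "bounded_linear proj"
proof -
  have "linear proj" by (rule linearI) (simp_all add: proj_def)
  then show ?thesis by (simp add: linear_conv_bounded_linear)
qed

lemma lin_Lphi: "x \<in> A0 \<Longrightarrow> linear (Lphi x)"
  using phi_deriv has_derivative_linear by blast

lemma tangent_sub:
  assumes p: "p \<in> Cs" and w: "w \<in> tangent_vectors Cs p"
  shows "w = Lphi (proj p) (proj w)"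
proof -
  obtain c where c: "\<forall>r. c r \<in> Cs" "c 0 = p" "(c has_vector_derivative w) (at 0)"
    using w by (auto simp: tangent_vectors_def)
  have x0: "proj p \<in> A0" using Cs_iff p U_sub by blast
  have ceq: "c = (\<lambda>r. phi (proj (c r)))" using Cs_iff c(1) by (metis ext)
  have cd: "(c has_derivative (\<lambda>h. h *\<^sub>R w)) (at 0)" using c(3) by (simp add: has_vector_derivative_def)
  have "((\<lambda>r. proj (c r)) has_derivative (\<lambda>h. proj (h *\<^sub>R w))) (at 0)"
    by (rule bounded_linear.has_derivative[OF bl_proj cd])
  moreover have "(phi has_derivative Lphi (proj p)) (at (proj (c 0)))" using phi_deriv[OF x0] c(2) by simp
  ultimately have "((\<lambda>r. phi (proj (c r))) has_derivative (\<lambda>h. Lphi (proj p) (proj (h *\<^sub>R w)))) (at 0)"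
    by (rule has_derivative_compose)
  then have "(c has_derivative (\<lambda>h. Lphi (proj p) (proj (h *\<^sub>R w)))) (at 0)" using ceq by metis
  then have "(\<lambda>h. h *\<^sub>R w) = (\<lambda>h. Lphi (proj p) (proj (h *\<^sub>R w)))"
    using cd has_derivative_unique by blast
  then have "(1::real) *\<^sub>R w = Lphi (proj p) (proj ((1::real) *\<^sub>R w))" by metis
  then show ?thesis by simp
qed

lemma tangent_sup:
  assumes p: "p \<in> Cs"
  shows "Lphi (proj p) a \<in> tangent_vectors Cs p"
proof -
  define x0 where "x0 = proj p"
  have x0U: "x0 \<in> U" and px: "p = phi x0" using Cs_iff p by (auto simp: x0_def)
  have x0A: "x0 \<in> A0" using x0U U_sub by blast
  obtain \<epsilon> where \<epsilon>: "\<epsilon> > 0" "ball x0 \<epsilon> \<subseteq> U" using open_U x0U open_contains_ball by blast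
  define \<delta> where "\<delta> = \<epsilon> / (norm a + 1)"
  have \<delta>: "\<delta> > 0" using \<epsilon> by (simp add: \<delta>_def add_nonneg_pos)
  define g where "g r = \<delta> * sin (r / \<delta>)" for r
  define c where "c r = phi (x0 + g r *\<^sub>R a)" for r
  have inU: "x0 + g r *\<^sub>R a \<in> U" for r
  proof -
    have "\<bar>g r\<bar> \<le> \<delta>" using \<delta> by (simp add: g_def abs_mult)
    then have "\<bar>g r\<bar> * norm a \<le> \<delta> * norm a" by (simp add: mult_right_mono)
    also have "\<delta> * norm a < \<epsilon>"
    proof -
      have "\<delta> * norm a < \<delta> * (norm a + 1)" using \<delta> by simp
      also have "\<dots> = \<epsilon>"
      proof -
        have "norm a + 1 \<noteq> 0" using norm_ge_zero[of a] by linarith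
        then show ?thesis by (simp add: \<delta>_def)
      qed
      finally show ?thesis .
    qed
    finally have "dist x0 (x0 + g r *\<^sub>R a) < \<epsilon>" by (simp add: dist_norm)
    then show ?thesis using \<epsilon>(2) by auto
  qed
  have cC: "\<forall>r. c r \<in> Cs" using inU phi_U by (auto simp: c_def)
  have c0: "c 0 = p" by (simp add: c_def g_def px)
  have gd: "(g has_real_derivative 1) (at 0)"
  proof -
    have "((\<lambda>r. \<delta> * sin (r / \<delta>)) has_real_derivative \<delta> * (cos (0 / \<delta>) * (1 / \<delta>))) (at 0)"
      by (intro DERIV_cmult DERIV_chain2[OF DERIV_sin] DERIV_cdivide DERIV_ident)
    then show ?thesis using \<delta> by (simp add: g_def[abs_def])
  qed
  have gd': "(g has_derivative (\<lambda>h. h * 1)) (at 0)"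
  proof -
    have "(\<lambda>h::real. h * 1) = (*) 1" by (auto simp: fun_eq_iff)
    then show ?thesis using gd unfolding has_field_derivative_def by simp
  qed
  have "((\<lambda>r. g r *\<^sub>R a) has_derivative (\<lambda>h. (h * 1) *\<^sub>R a)) (at 0)"
    by (rule has_derivative_scaleR_left[OF gd'])
  then have "((\<lambda>r. x0 + g r *\<^sub>R a) has_derivative (\<lambda>h. 0 + (h * 1) *\<^sub>R a)) (at 0)"
    by (intro has_derivative_add has_derivative_const)
  then have "((\<lambda>r. x0 + g r *\<^sub>R a) has_derivative (\<lambda>h. (h * 1) *\<^sub>R a)) (at 0)" by simp
  moreover have "(phi has_derivative Lphi x0) (at (x0 + g 0 *\<^sub>R a))" using phi_deriv[OF x0A] by (simp add: g_def)
  ultimately have "((\<lambda>r. phi (x0 + g r *\<^sub>R a)) has_derivative (\<lambda>h. Lphi x0 ((h * 1) *\<^sub>R a))) (at 0)"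
    by (rule has_derivative_compose)
  moreover have "(\<lambda>h. Lphi x0 ((h * 1) *\<^sub>R a)) = (\<lambda>h. h *\<^sub>R Lphi x0 a)"
    using lin_Lphi[OF x0A] by (simp add: linear_scale)
  ultimately have "(c has_vector_derivative Lphi x0 a) (at 0)"
    by (simp add: c_def[abs_def] has_vector_derivative_def)
  then show ?thesis using cC c0 by (auto simp: tangent_vectors_def x0_def)
qed

lemma tangent_eq: "p \<in> Cs \<Longrightarrow> tangent_vectors Cs p = range (Lphi (proj p))"
  using tangent_sub tangent_sup by blast

lemma lagrangian:
  assumes x: "x \<in> A0"
  shows "twisted_form (Lphi x a) (Lphi x b) = 0"
proof -
  have S12: "Dd (0,1,0,0) rs x = Dd (1,0,0,0) ru x"
    unfolding rs_def ru_def by (rule K_schwarz[OF K_rho open_A0 x B4(1) B4(2)])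
  have S13: "Dd (0,0,1,0) rs x = Dd (1,0,0,0) rv x"
    unfolding rs_def rv_def by (rule K_schwarz[OF K_rho open_A0 x B4(1) B4(3)])
  have S23: "Dd (0,0,1,0) ru x = Dd (0,1,0,0) rv x"
    unfolding ru_def rv_def by (rule K_schwarz[OF K_rho open_A0 x B4(2) B4(3)])
  have d1: "Dd (1,0,0,0) rho x = rs x" "Dd (0,1,0,0) rho x = ru x" "Dd (0,0,1,0) rho x = rv x"
    by (simp_all add: rs_def ru_def rv_def)
  obtain a1 a2 a3 a4 where a: "a = (a1, a2, a3, a4)" by (cases a) auto
  obtain b1 b2 b3 b4 where b: "b = (b1, b2, b3, b4)" by (cases b) auto
  show ?thesis
    unfolding a b Lphi_def DD_def tau_def d1 S12 S13 S23
    by (simp add: algebra_simps)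
qed


lemma det_not_par:
  assumes "\<not> parallel2 (a1, a2) (b1, b2)"
  shows "a1 * b2 - a2 * b1 \<noteq> (0::real)"
proof
  assume d: "a1 * b2 - a2 * b1 = 0"
  have "parallel2 (a1, a2) (b1, b2)"
  proof (cases "(b2, a2) = (0, 0)")
    case False
    have "b2 *\<^sub>R (a1, a2) + (- a2) *\<^sub>R (b1, b2) = 0" using d by (simp add: algebra_simps zero_prod_def)
    moreover have "(b2, - a2) \<noteq> (0, 0)" using False by simp
    ultimately show ?thesis unfolding parallel2_def by blast
  next
    case z: True
    show ?thesis
    proof (cases "(b1, a1) = (0, 0)")
      case False
      have "b1 *\<^sub>R (a1, a2) + (- a1) *\<^sub>R (b1, b2) = 0" using z by (simp add: algebra_simps zero_prod_def)
      moreover have "(b1, - a1) \<noteq> (0, 0)" using False by simp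
      ultimately show ?thesis unfolding parallel2_def by blast
    next
      case True
      have "(1::real) *\<^sub>R (a1, a2) + 0 *\<^sub>R (b1, b2) = 0" using z True by (simp add: zero_prod_def)
      moreover have "((1::real), (0::real)) \<noteq> (0, 0)" by simp
      ultimately show ?thesis unfolding parallel2_def by blast
    qed
  qed
  then show False using assms by blast
qed

lemma grad_eq:
  assumes x: "x = (s, u, v, t)" "x \<in> A0"
  shows "grad_uv (\<lambda>u' v'. Rhat \<psi> \<gamma> u' v' s \<bullet> gdot \<gamma> s) u v
       = (- (c0 / 2) * Dd (0,1,0,0) rs x, - (c0 / 2) * Dd (0,0,1,0) rs x)"
proof -
  have c0': "c0 \<noteq> 0" using c0 by simp
  have one: "deriv (\<lambda>h. Rhat \<psi> \<gamma> (fst (snd (x + h *\<^sub>R b))) (fst (snd (snd (x + h *\<^sub>R b)))) s \<bullet> gdot \<gamma> s) 0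
      = - (c0 / 2) * Dd b rs x" if b: "b \<in> Basis" "fst b = 0" for b
  proof -
    have ev: "eventually (\<lambda>h. x + h *\<^sub>R b \<in> A0) (nhds 0)" by (rule ev_line_in_open[OF open_A0 x(2)])
    have "eventually (\<lambda>h. - (c0 / 2) * rs (x + h *\<^sub>R b) =
        Rhat \<psi> \<gamma> (fst (snd (x + h *\<^sub>R b))) (fst (snd (snd (x + h *\<^sub>R b)))) s \<bullet> gdot \<gamma> s) (nhds 0)"
    proof (rule eventually_mono[OF ev])
      fix h assume h: "x + h *\<^sub>R b \<in> A0"
      have xe: "x + h *\<^sub>R b = (s, fst (snd (x + h *\<^sub>R b)), fst (snd (snd (x + h *\<^sub>R b))), snd (snd (snd (x + h *\<^sub>R b))))"
        using b(2) x(1) by (simp add: prod_eq_iff)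
      show "- (c0 / 2) * rs (x + h *\<^sub>R b) = Rhat \<psi> \<gamma> (fst (snd (x + h *\<^sub>R b))) (fst (snd (snd (x + h *\<^sub>R b)))) s \<bullet> gdot \<gamma> s"
        using rs_eq[OF xe h] c0' by simp
    qed
    note evq = this
    have "((\<lambda>h. - (c0 / 2) * rs (x + h *\<^sub>R b)) has_real_derivative - (c0 / 2) * Dd b rs x) (at 0)"
      by (rule DERIV_cmult[OF K_Dd(2)[OF K_rs open_A0 b(1) x(2)]])
    then have "((\<lambda>h. Rhat \<psi> \<gamma> (fst (snd (x + h *\<^sub>R b))) (fst (snd (snd (x + h *\<^sub>R b)))) s \<bullet> gdot \<gamma> s)
        has_real_derivative - (c0 / 2) * Dd b rs x) (at 0)"
      by (rule DERIV_cong_ev[OF refl evq refl, THEN iffD1])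
    then show ?thesis by (rule DERIV_imp_deriv)
  qed
  have "deriv (\<lambda>h. Rhat \<psi> \<gamma> (u + h) v s \<bullet> gdot \<gamma> s) 0 = - (c0 / 2) * Dd (0,1,0,0) rs x"
    using one[of "(0,1,0,0)"] B4 x(1) by simp
  moreover have "deriv (\<lambda>h. Rhat \<psi> \<gamma> u (v + h) s \<bullet> gdot \<gamma> s) 0 = - (c0 / 2) * Dd (0,0,1,0) rs x"
    using one[of "(0,0,1,0)"] B4 x(1) by simp
  ultimately show ?thesis by (simp add: grad_uv_def)
qed

lemma ds_piT_eq:
  assumes x: "x = (s, u, v, t)" "x \<in> A0"
  shows "ds_piT \<psi> \<gamma> u v s = ((c0 / 2) * Dd (1,0,0,0) ru x, (c0 / 2) * Dd (1,0,0,0) rv x)"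
proof -
  have c0': "c0 \<noteq> 0" using c0 by simp
  have ev: "eventually (\<lambda>h. x + h *\<^sub>R (1,0,0,0) \<in> A0) (nhds 0)" by (rule ev_line_in_open[OF open_A0 x(2)])
  have xe: "x + h *\<^sub>R (1,0,0,0) = (s + h, u, v, t)" for h using x(1) by simp
  have e1: "eventually (\<lambda>h. (c0 / 2) * ru (x + h *\<^sub>R (1,0,0,0)) = fst (piT \<psi> \<gamma> u v (s + h))) (nhds 0)"
  proof (rule eventually_mono[OF ev])
    fix h assume h: "x + h *\<^sub>R (1,0,0,0) \<in> A0"
    show "(c0 / 2) * ru (x + h *\<^sub>R (1,0,0,0)) = fst (piT \<psi> \<gamma> u v (s + h))"
      using ru_eq[OF xe h] c0' by simp
  qed
  have e2: "eventually (\<lambda>h. (c0 / 2) * rv (x + h *\<^sub>R (1,0,0,0)) = snd (piT \<psi> \<gamma> u v (s + h))) (nhds 0)"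
  proof (rule eventually_mono[OF ev])
    fix h assume h: "x + h *\<^sub>R (1,0,0,0) \<in> A0"
    show "(c0 / 2) * rv (x + h *\<^sub>R (1,0,0,0)) = snd (piT \<psi> \<gamma> u v (s + h))"
      using rv_eq[OF xe h] c0' by simp
  qed
  have d1: "((\<lambda>h. (c0 / 2) * ru (x + h *\<^sub>R (1,0,0,0))) has_real_derivative (c0 / 2) * Dd (1,0,0,0) ru x) (at 0)"
    by (rule DERIV_cmult[OF K_Dd(2)[OF K_ru open_A0 B4(1) x(2)]])
  have d2: "((\<lambda>h. (c0 / 2) * rv (x + h *\<^sub>R (1,0,0,0))) has_real_derivative (c0 / 2) * Dd (1,0,0,0) rv x) (at 0)"
    by (rule DERIV_cmult[OF K_Dd(2)[OF K_rv open_A0 B4(1) x(2)]])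
  have "((\<lambda>h. fst (piT \<psi> \<gamma> u v (s + h))) has_real_derivative (c0 / 2) * Dd (1,0,0,0) ru x) (at 0)"
    by (rule DERIV_cong_ev[OF refl e1 refl, THEN iffD1, OF d1])
  moreover have "((\<lambda>h. snd (piT \<psi> \<gamma> u v (s + h))) has_real_derivative (c0 / 2) * Dd (1,0,0,0) rv x) (at 0)"
    by (rule DERIV_cong_ev[OF refl e2 refl, THEN iffD1, OF d2])
  ultimately show ?thesis by (simp add: ds_piT_def DERIV_imp_deriv)
qed


lemma graph_type:
  assumes p: "p \<in> Cs" "p \<notin> Sigma1 \<psi> \<gamma> c0 s1 s2 t1 t2 D" "p \<notin> Sigma2 \<psi> \<gamma> c0 s1 s2 t1 t2 D"
  shows "locally_graph_type Cs p"
proof -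
  obtain s t \<sigma> \<tau> u v \<xi> \<eta> where pp: "p = ((s, t, \<sigma>, \<tau>), (u, v, \<xi>, \<eta>))" by (cases p) auto
  define x where "x = (s, u, v, \<tau>)"
  have px: "proj p = x" by (simp add: pp proj_def x_def)
  have xU: "x \<in> U" using Cs_iff p(1) px by metis
  have xA: "x \<in> A0" and tn: "\<tau> \<noteq> 0" using xU by (auto simp: U_def tau_def x_def)
  have tx: "tau x = \<tau>" by (simp add: tau_def x_def)
  have pL: "p \<in> Lambda' \<psi> \<gamma> c0 s1 s2 t1 t2 D" using p(1) by (simp add: Cs_def)
  have np1: "\<not> parallel2 (piT \<psi> \<gamma> u v s) (grad_uv (\<lambda>u' v'. Rhat \<psi> \<gamma> u' v' s \<bullet> gdot \<gamma> s) u v)"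
    using p(2) pL by (simp add: Sigma1_def pp)
  have np2: "\<not> parallel2 (piT \<psi> \<gamma> u v s) (ds_piT \<psi> \<gamma> u v s)"
    using p(3) pL by (simp add: Sigma2_def pp)
  have c0': "c0 \<noteq> 0" using c0 by simp
  have piT: "piT \<psi> \<gamma> u v s = ((c0 / 2) * ru x, (c0 / 2) * rv x)"
    using ru_eq[OF x_def xA] rv_eq[OF x_def xA] c0' by (simp add: prod_eq_iff)
  define Rs where "Rs = rs x"
  define Ru where "Ru = ru x"
  define Rv where "Rv = rv x"
  define Rss where "Rss = Dd (1,0,0,0) rs x"
  define Rsu where "Rsu = Dd (0,1,0,0) rs x"
  define Rsv where "Rsv = Dd (0,0,1,0) rs x"
  define Rus where "Rus = Dd (1,0,0,0) ru x"
  define Ruu where "Ruu = Dd (0,1,0,0) ru x"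
  define Ruv where "Ruv = Dd (0,0,1,0) ru x"
  define Rvs where "Rvs = Dd (1,0,0,0) rv x"
  define Rvu where "Rvu = Dd (0,1,0,0) rv x"
  define Rvv where "Rvv = Dd (0,0,1,0) rv x"
  have d1: "Dd (1,0,0,0) rho x = Rs" "Dd (0,1,0,0) rho x = Ru" "Dd (0,0,1,0) rho x = Rv"
    by (simp_all add: rs_def ru_def rv_def Rs_def Ru_def Rv_def)
  have k: "(c0 / 2) * (c0 / 2) \<noteq> 0" using c0' by simp
  have "(c0 / 2 * Ru) * (- (c0 / 2) * Rsv) - (c0 / 2 * Rv) * (- (c0 / 2) * Rsu) \<noteq> 0"
    using det_not_par[of "c0 / 2 * Ru" "c0 / 2 * Rv" "- (c0 / 2) * Rsu" "- (c0 / 2) * Rsv"] np1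
    unfolding piT grad_eq[OF x_def xA] Ru_def Rv_def Rsu_def Rsv_def by simp
  moreover have "(c0 / 2 * Ru) * (- (c0 / 2) * Rsv) - (c0 / 2 * Rv) * (- (c0 / 2) * Rsu)
      = - ((c0 / 2) * (c0 / 2)) * (Ru * Rsv - Rv * Rsu)" by (simp add: field_simps)
  ultimately have D1: "Ru * Rsv - Rv * Rsu \<noteq> 0" by simp
  have "(c0 / 2 * Ru) * (c0 / 2 * Rvs) - (c0 / 2 * Rv) * (c0 / 2 * Rus) \<noteq> 0"
    using det_not_par[of "c0 / 2 * Ru" "c0 / 2 * Rv" "c0 / 2 * Rus" "c0 / 2 * Rvs"] np2
    unfolding piT ds_piT_eq[OF x_def xA] Ru_def Rv_def Rus_def Rvs_def by simp
  moreover have "(c0 / 2 * Ru) * (c0 / 2 * Rvs) - (c0 / 2 * Rv) * (c0 / 2 * Rus)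
      = ((c0 / 2) * (c0 / 2)) * (Ru * Rvs - Rv * Rus)" by (simp add: algebra_simps)
  ultimately have D2: "Ru * Rvs - Rv * Rus \<noteq> 0" by simp
  have fstL: "fst (Lphi x a) = (fst a, fst a * Rs + fst (snd a) * Ru + fst (snd (snd a)) * Rv,
      - (\<tau> * (fst a * Rss + fst (snd a) * Rsu + fst (snd (snd a)) * Rsv) + snd (snd (snd a)) * Rs), snd (snd (snd a)))" for a
    unfolding Lphi_def DD_def d1 tx Rss_def[symmetric] Rsu_def[symmetric] Rsv_def[symmetric] Rs_def[symmetric] by (simp add: tau_def)
  have sndL: "snd (Lphi x a) = (fst (snd a), fst (snd (snd a)),
      \<tau> * (fst a * Rus + fst (snd a) * Ruu + fst (snd (snd a)) * Ruv) + snd (snd (snd a)) * Ru,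
      \<tau> * (fst a * Rvs + fst (snd a) * Rvu + fst (snd (snd a)) * Rvv) + snd (snd (snd a)) * Rv)" for a
    unfolding Lphi_def DD_def tx Rus_def[symmetric] Ruu_def[symmetric] Ruv_def[symmetric] Rvs_def[symmetric] Rvu_def[symmetric] Rvv_def[symmetric] Ru_def[symmetric] Rv_def[symmetric] by (simp add: tau_def)
  have s1: "\<exists>a. fst (Lphi x a) = z" for z :: R4
  proof -
    obtain z1 z2 z3 z4 where z: "z = (z1, z2, z3, z4)" by (cases z) auto
    define iD where "iD = inverse (Ru * Rsv - Rv * Rsu)"
    have iD: "(Ru * Rsv - Rv * Rsu) * iD = 1" using D1 by (simp add: iD_def)
    define P where "P = z2 - z1 * Rs"
    define Q where "Q = (- z3 - z4 * Rs) / \<tau> - z1 * Rss"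
    define a2 where "a2 = (P * Rsv - Q * Rv) * iD"
    define a3 where "a3 = (Q * Ru - P * Rsu) * iD"
    have E1: "a2 * Ru + a3 * Rv = P"
    proof -
      have "a2 * Ru + a3 * Rv = P * ((Ru * Rsv - Rv * Rsu) * iD)" by (simp add: a2_def a3_def algebra_simps)
      then show ?thesis using iD by simp
    qed
    have E2: "a2 * Rsu + a3 * Rsv = Q"
    proof -
      have "a2 * Rsu + a3 * Rsv = Q * ((Ru * Rsv - Rv * Rsu) * iD)" by (simp add: a2_def a3_def algebra_simps)
      then show ?thesis using iD by simp
    qed
    have "fst (Lphi x (z1, a2, a3, z4)) = z"
    proof -
      have c2: "z1 * Rs + a2 * Ru + a3 * Rv = z2" using E1 by (simp add: P_def)
      have c3: "- (\<tau> * (z1 * Rss + a2 * Rsu + a3 * Rsv) + z4 * Rs) = z3"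
      proof -
        have "z1 * Rss + a2 * Rsu + a3 * Rsv = (- z3 - z4 * Rs) / \<tau>" using E2 by (simp add: Q_def)
        then show ?thesis using tn by (simp add: field_simps)
      qed
      show ?thesis using c2 c3 by (simp add: fstL z)
    qed
    then show ?thesis by blast
  qed
  have s2: "\<exists>a. snd (Lphi x a) = z" for z :: R4
  proof -
    obtain z1 z2 z3 z4 where z: "z = (z1, z2, z3, z4)" by (cases z) auto
    define iD where "iD = inverse (Ru * Rvs - Rv * Rus)"
    have iD: "(Ru * Rvs - Rv * Rus) * iD = 1" using D2 by (simp add: iD_def)
    define P where "P = z3 - \<tau> * (z1 * Ruu + z2 * Ruv)"
    define Q where "Q = z4 - \<tau> * (z1 * Rvu + z2 * Rvv)"
    define b where "b = (Q * Ru - P * Rv) * iD"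
    define a4 where "a4 = (P * Rvs - Q * Rus) * iD"
    have E1: "b * Rus + a4 * Ru = P"
    proof -
      have "b * Rus + a4 * Ru = P * ((Ru * Rvs - Rv * Rus) * iD)" by (simp add: b_def a4_def algebra_simps)
      then show ?thesis using iD by simp
    qed
    have E2: "b * Rvs + a4 * Rv = Q"
    proof -
      have "b * Rvs + a4 * Rv = Q * ((Ru * Rvs - Rv * Rus) * iD)" by (simp add: b_def a4_def algebra_simps)
      then show ?thesis using iD by simp
    qed
    have "snd (Lphi x (b / \<tau>, z1, z2, a4)) = z"
    proof -
      have tb: "\<tau> * (b / \<tau>) = b" using tn by simp
      have c3: "\<tau> * (b / \<tau> * Rus + z1 * Ruu + z2 * Ruv) + a4 * Ru = z3"
      proof -
        have "\<tau> * (b / \<tau> * Rus + z1 * Ruu + z2 * Ruv) + a4 * Ru = (\<tau> * (b / \<tau>)) * Rus + \<tau> * (z1 * Ruu + z2 * Ruv) + a4 * Ru"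
          by (simp add: algebra_simps)
        then show ?thesis using E1 tb by (simp add: P_def)
      qed
      have c4: "\<tau> * (b / \<tau> * Rvs + z1 * Rvu + z2 * Rvv) + a4 * Rv = z4"
      proof -
        have "\<tau> * (b / \<tau> * Rvs + z1 * Rvu + z2 * Rvv) + a4 * Rv = (\<tau> * (b / \<tau>)) * Rvs + \<tau> * (z1 * Rvu + z2 * Rvv) + a4 * Rv"
          by (simp add: algebra_simps)
        then show ?thesis using E2 tb by (simp add: Q_def)
      qed
      show ?thesis using c3 c4 by (simp add: sndL z)
    qed
    then show ?thesis by blast
  qed
  have T: "tangent_vectors Cs p = range (Lphi x)" using tangent_eq[OF p(1)] px by simp
  have "fst ` tangent_vectors Cs p = UNIV" unfolding T using s1 by (auto simp: image_iff) (metis)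
  moreover have "snd ` tangent_vectors Cs p = UNIV" unfolding T using s2 by (auto simp: image_iff) (metis)
  ultimately show ?thesis by (simp add: locally_graph_type_def dim_UNIV)
qed

theorem main:
  "homogeneous_canonical_relation (Yset s1 s2 t1 t2) (Xset \<psi> \<gamma> c0 s1 s2 t1 t2 D) Cs
   \<and> (\<forall>p \<in> Cs - (Sigma1 \<psi> \<gamma> c0 s1 s2 t1 t2 D \<union> Sigma2 \<psi> \<gamma> c0 s1 s2 t1 t2 D). locally_graph_type Cs p)"
proof
  have lag: "\<forall>p\<in>Cs. \<forall>w1\<in>tangent_vectors Cs p. \<forall>w2\<in>tangent_vectors Cs p. twisted_form w1 w2 = 0"
  proof (intro ballI)
    fix p w1 w2 assume p: "p \<in> Cs" and w: "w1 \<in> tangent_vectors Cs p" "w2 \<in> tangent_vectors Cs p"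
    have A: "proj p \<in> A0" using Cs_iff p U_sub by blast
    from w obtain a b where "w1 = Lphi (proj p) a" "w2 = Lphi (proj p) b" using tangent_eq[OF p] by auto
    then show "twisted_form w1 w2 = 0" using lagrangian[OF A] by simp
  qed
  show "homogeneous_canonical_relation (Yset s1 s2 t1 t2) (Xset \<psi> \<gamma> c0 s1 s2 t1 t2 D) Cs"
    unfolding homogeneous_canonical_relation_def
    using closed_Cs conic_Cs submanifold_Cs lag by (auto simp: Cs_def)
  show "\<forall>p \<in> Cs - (Sigma1 \<psi> \<gamma> c0 s1 s2 t1 t2 D \<union> Sigma2 \<psi> \<gamma> c0 s1 s2 t1 t2 D). locally_graph_type Cs p"
    using graph_type by blast
qed

end

theorem proposition2:
  fixes \<psi> :: "real \<times> real \<Rightarrow> real^3" and \<gamma> :: "real \<Rightarrow> real^3"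
    and D :: "(real \<times> real) set" and c0 s1 s2 t1 t2 :: real
  assumes c0: "c0 > 0"
    and D_open: "open D"
    and psi_smooth: "smooth_on_set D \<psi>"
    and psi_inj: "inj_on \<psi> D"
    and psi_homeo: "continuous_on (\<psi> ` D) (inv_into D \<psi>)"
    and psi_imm: "\<forall>x\<in>D. \<exists>L. (\<psi> has_derivative L) (at x) \<and> inj L"
    and gamma_smooth: "smooth_on_set {s1<..<s2} \<gamma>"
    and gamma_inj: "inj_on \<gamma> {s1<..<s2}"
    and gamma_homeo: "continuous_on (\<gamma> ` {s1<..<s2}) (inv_into {s1<..<s2} \<gamma>)"
    and gamma_unit: "\<forall>s\<in>{s1<..<s2}. norm (vector_derivative \<gamma> (at s)) = 1"
    and dist_pos: "\<exists>\<delta>>0. \<forall>x\<in>D. \<forall>s\<in>{s1<..<s2}. \<delta> \<le> dist (\<psi> x) (\<gamma> s)"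
  shows "homogeneous_canonical_relation (Yset s1 s2 t1 t2) (Xset \<psi> \<gamma> c0 s1 s2 t1 t2 D)
           (Lambda' \<psi> \<gamma> c0 s1 s2 t1 t2 D \<inter> cotangent_nonzero (Yset s1 s2 t1 t2) (Xset \<psi> \<gamma> c0 s1 s2 t1 t2 D))
      \<and> (\<forall>p \<in> (Lambda' \<psi> \<gamma> c0 s1 s2 t1 t2 D \<inter> cotangent_nonzero (Yset s1 s2 t1 t2) (Xset \<psi> \<gamma> c0 s1 s2 t1 t2 D))
                 - (Sigma1 \<psi> \<gamma> c0 s1 s2 t1 t2 D \<union> Sigma2 \<psi> \<gamma> c0 s1 s2 t1 t2 D).
           locally_graph_type (Lambda' \<psi> \<gamma> c0 s1 s2 t1 t2 D \<inter> cotangent_nonzero (Yset s1 s2 t1 t2) (Xset \<psi> \<gamma> c0 s1 s2 t1 t2 D)) p)"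
proof -
  interpret sar \<psi> \<gamma> D c0 s1 s2 t1 t2
    using c0 D_open psi_smooth psi_imm gamma_smooth dist_pos by unfold_locales
  show ?thesis using main unfolding Cs_def .
qed

end
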